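(* Let $f$ be a ternary cubic form with $f_{333}\neq0$, and set $g=\Delta_{333}f-f_{333}\Delta$. (1) $f$ is completely reducible (a product of three linear forms) if and only if $g_{113}=g_{123}=g_{223}=g_{133}=g_{233}=0$. (2) If moreover $4f_{113}f_{223}-f_{123}^2\neq0$, then $f$ is completely reducible if and only if $g_{113}=g_{123}=g_{223}=0$.
   Context: A ternary cubic form is written $f=\sum_{1\le i\le j\le k\le3}f_{ijk}x_ix_jx_k$ with complex coefficients, so $f_{ijk}$ is the coefficient of $x_ix_jx_k$; the same convention applies to $g_{ijk}$ and $\Delta_{ijk}$. $\Delta$ is the Hessian of $f$ normalized as $\Delta=\tfrac12\det(\partial^2f/\partial x_i\partial x_j)$; equivalently $\Delta=\tfrac1{12}J^2[f,f,f]$, where $J^2$ is the second transvectant. *)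

theory Defs
  imports Complex_Main
begin

text \<open>Polynomials in x1, x2, x3 over the complex numbers, represented by their
coefficient function: P a b c is the coefficient of x1^a x2^b x3^c.\<close>
type_synonym poly3 = "nat \<Rightarrow> nat \<Rightarrow> nat \<Rightarrow> complex"

definition padd :: "poly3 \<Rightarrow> poly3 \<Rightarrow> poly3" where
  "padd P Q = (\<lambda>a b c. P a b c + Q a b c)"

definition psub :: "poly3 \<Rightarrow> poly3 \<Rightarrow> poly3" where
  "psub P Q = (\<lambda>a b c. P a b c - Q a b c)"

definition psmult :: "complex \<Rightarrow> poly3 \<Rightarrow> poly3" where
  "psmult s P = (\<lambda>a b c. s * P a b c)"

definition pmult :: "poly3 \<Rightarrow> poly3 \<Rightarrow> poly3" where
  "pmult P Q = (\<lambda>a b c. \<Sum>a1\<le>a. \<Sum>b1\<le>b. \<Sum>c1\<le>c.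
       P a1 b1 c1 * Q (a - a1) (b - b1) (c - c1))"

definition pderiv3 :: "nat \<Rightarrow> poly3 \<Rightarrow> poly3" where
  "pderiv3 i P = (\<lambda>a b c.
     if i = 1 then of_nat (a + 1) * P (a + 1) b c
     else if i = 2 then of_nat (b + 1) * P a (b + 1) c
     else of_nat (c + 1) * P a b (c + 1))"

definition cubic_form :: "poly3 \<Rightarrow> bool" where
  "cubic_form P \<longleftrightarrow> (\<forall>a b c. a + b + c \<noteq> 3 \<longrightarrow> P a b c = 0)"

text \<open>coeff3 P i j k is the coefficient of the monomial x_i x_j x_k.\<close>
definition cnt :: "nat \<Rightarrow> nat list \<Rightarrow> nat" where
  "cnt n xs = length (filter (\<lambda>t. t = n) xs)"

definition coeff3 :: "poly3 \<Rightarrow> nat \<Rightarrow> nat \<Rightarrow> nat \<Rightarrow> complex" where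
  "coeff3 P i j k = P (cnt 1 [i, j, k]) (cnt 2 [i, j, k]) (cnt 3 [i, j, k])"

definition pdet3 :: "(nat \<Rightarrow> nat \<Rightarrow> poly3) \<Rightarrow> poly3" where
  "pdet3 H =
     padd (psub (pmult (H 1 1) (psub (pmult (H 2 2) (H 3 3)) (pmult (H 2 3) (H 3 2))))
                (pmult (H 1 2) (psub (pmult (H 2 1) (H 3 3)) (pmult (H 2 3) (H 3 1)))))
          (pmult (H 1 3) (psub (pmult (H 2 1) (H 3 2)) (pmult (H 2 2) (H 3 1))))"

definition hessian3 :: "poly3 \<Rightarrow> poly3" where
  "hessian3 f = psmult (1/2) (pdet3 (\<lambda>i j. pderiv3 i (pderiv3 j f)))"

definition linform :: "complex \<Rightarrow> complex \<Rightarrow> complex \<Rightarrow> poly3" where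
  "linform v1 v2 v3 = (\<lambda>a b c.
     if (a, b, c) = (1, 0, 0) then v1
     else if (a, b, c) = (0, 1, 0) then v2
     else if (a, b, c) = (0, 0, 1) then v3 else 0)"

definition completely_reducible :: "poly3 \<Rightarrow> bool" where
  "completely_reducible f \<longleftrightarrow>
     (\<exists>a1 a2 a3 b1 b2 b3 c1 c2 c3.
        f = pmult (pmult (linform a1 a2 a3) (linform b1 b2 b3)) (linform c1 c2 c3))"

end

theory Submission
  imports Defs "HOL-Computational_Algebra.Polynomial"
begin



lemma ex_cube_root: "\<exists>z::complex. z^3 = c"
proof (cases "c = 0")
  case True then show ?thesis by (intro exI[of _ 0]) simp
next
  case False
  have "card {z::complex. z ^ 3 = c} = 3" by (rule card_nth_roots) (use False in auto)
  then have "{z::complex. z ^ 3 = c} \<noteq> {}" by (metis card.empty zero_neq_numeral)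
  then show ?thesis by auto
qed

lemma ex_nonroot:
  fixes p :: "complex poly" assumes "p \<noteq> 0" shows "\<exists>t. poly p t \<noteq> 0"
proof -
  have "finite {x. poly p x = 0}" by (rule poly_roots_finite[OF assms])
  then obtain t where "t \<notin> {x. poly p x = 0}"
    using ex_new_if_finite[OF infinite_UNIV_char_0] by blast
  then show ?thesis by auto
qed

definition sol :: "complex \<Rightarrow> complex \<Rightarrow> complex \<Rightarrow> complex \<Rightarrow> complex \<Rightarrow> complex \<Rightarrow> complex \<Rightarrow> complex \<Rightarrow> complex \<Rightarrow> complex \<Rightarrow> complex \<Rightarrow> bool" where
  "sol p11 p12 p22 r1 r2 r3 r4 a1 a2 b1 b2 \<longleftrightarrow>
     3*a1*b1 = -p11 \<and> 3*(a1*b2+a2*b1) = -p12 \<and> 3*a2*b2 = -p22 \<and>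
     a1^3+b1^3 = r1 \<and> 3*(a1^2*a2+b1^2*b2) = r2 \<and> 3*(a1*a2^2+b1*b2^2) = r3 \<and> a2^3+b2^3 = r4"

lemma fwd_bin:
  fixes xA xB xC xD :: complex
  shows
  "(4*(-3*xA*xC)*(-3*xB*xD)-(-3*(xA*xD+xB*xC))^2)*(-3*xA*xC) - 9*(xA^3+xC^3)*(3*(xA*xB^2+xC*xD^2)) + 3*(3*(xA^2*xB+xC^2*xD))^2 = 0"
  "(4*(-3*xA*xC)*(-3*xB*xD)-(-3*(xA*xD+xB*xC))^2)*(-3*(xA*xD+xB*xC)) - 27*(xA^3+xC^3)*(xB^3+xD^3) + 3*(3*(xA^2*xB+xC^2*xD))*(3*(xA*xB^2+xC*xD^2)) = 0"
  "(-3*xA*xC)*(3*(xA*xB^2+xC*xD^2)) - (-3*(xA*xD+xB*xC))*(3*(xA^2*xB+xC^2*xD)) + 3*(-3*xB*xD)*(xA^3+xC^3) = 0"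
  "3*(-3*xA*xC)*(xB^3+xD^3) - (-3*(xA*xD+xB*xC))*(3*(xA*xB^2+xC*xD^2)) + (-3*xB*xD)*(3*(xA^2*xB+xC^2*xD)) = 0"
  by algebra+

lemma uniq_gen:
  fixes p11 p12 p22 r1 r2 r3 r4 q22 s3 s4 :: complex
  assumes D: "4*p11^3+27*r1^2 \<noteq> 0"
  and A1: "(4*p11*p22-p12^2)*p11 - 9*r1*r3 + 3*r2^2 = 0"
  and A2: "(4*p11*p22-p12^2)*p12 - 27*r1*r4 + 3*r2*r3 = 0"
  and B1: "p11*r3 - p12*r2 + 3*p22*r1 = 0"
  and B2: "3*p11*r4 - p12*r3 + p22*r2 = 0"
  and A1': "(4*p11*q22-p12^2)*p11 - 9*r1*s3 + 3*r2^2 = 0"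
  and A2': "(4*p11*q22-p12^2)*p12 - 27*r1*s4 + 3*r2*s3 = 0"
  and B1': "p11*s3 - p12*r2 + 3*q22*r1 = 0"
  and B2': "3*p11*s4 - p12*s3 + q22*r2 = 0"
  shows "p22 = q22 \<and> r3 = s3 \<and> r4 = s4"
proof -
  have e1: "p11*(r3-s3) + 3*r1*(p22-q22) = 0" using B1 B1' by algebra
  have e2: "4*p11^2*(p22-q22) - 9*r1*(r3-s3) = 0" using A1 A1' by algebra
  have "(4*p11^3+27*r1^2)*(p22-q22) = 0" using e1 e2 by algebra
  then have p: "p22 = q22" using D by simp
  have "r1*(r3-s3) = 0" using e2 p by simp
  moreover have "p11*(r3-s3) = 0" using e1 p by simp
  ultimately have r3: "r3 = s3" using D by (auto simp: power3_eq_cube power2_eq_square)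
  have "3*p11*(r4-s4) = 0" using B2 B2' p r3 by algebra
  moreover have "27*r1*(r4-s4) = 0" using A2 A2' p r3 by algebra
  ultimately have "r4 = s4" using D by (auto simp: power3_eq_cube power2_eq_square)
  with p r3 show ?thesis by simp
qed

lemma core_gen:
  fixes p11 p12 p22 r1 r2 r3 r4 :: complex
  assumes D: "4*p11^3+27*r1^2 \<noteq> 0"
  and A1: "(4*p11*p22-p12^2)*p11 - 9*r1*r3 + 3*r2^2 = 0"
  and A2: "(4*p11*p22-p12^2)*p12 - 27*r1*r4 + 3*r2*r3 = 0"
  and B1: "p11*r3 - p12*r2 + 3*p22*r1 = 0"
  and B2: "3*p11*r4 - p12*r3 + p22*r2 = 0"
  shows "\<exists>a1 a2 b1 b2. sol p11 p12 p22 r1 r2 r3 r4 a1 a2 b1 b2"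
proof -
  define DD where "DD = r1^2 + 4*p11^3/27"
  have DD: "DD \<noteq> 0" using D unfolding DD_def by (auto simp: field_simps)
  obtain w where w: "w^2 = DD" "r1 + w \<noteq> 0"
  proof (cases "r1 + csqrt DD = 0")
    case True
    have "(csqrt DD)^2 \<noteq> 0" using DD by simp
    then have "csqrt DD \<noteq> 0" by auto
    have "r1 = - csqrt DD" using True by (simp add: add_eq_0_iff)
    then have eq: "r1 + (- csqrt DD) = -2 * csqrt DD" by simp
    have ne: "-2 * csqrt DD \<noteq> 0" using \<open>csqrt DD \<noteq> 0\<close> by simp
    have "r1 + (- csqrt DD) \<noteq> 0" using eq ne by argo
    moreover have "(- csqrt DD)^2 = DD" by simp
    ultimately show ?thesis using that by blast
  next
    case False then show ?thesis using that[of "csqrt DD"] by simp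
  qed
  have wnz: "w \<noteq> 0" using w DD by auto
  obtain a1 where a1: "a1^3 = (r1+w)/2" using ex_cube_root by blast
  have a1nz: "a1 \<noteq> 0" using a1 w(2) by auto
  define b1 where "b1 = -p11/(3*a1)"
  have key: "-(p11^3)/27 = (r1+w)*(r1-w)/4"
  proof -
    have "(r1+w)*(r1-w) = r1^2 - w^2" by (simp add: algebra_simps power2_eq_square)
    then show ?thesis using w(1) unfolding DD_def by simp
  qed
  have b1c: "b1^3 = (r1-w)/2"
  proof -
    have "b1^3 = -(p11^3)/(27*a1^3)" unfolding b1_def by (simp add: power_divide power_mult_distrib)
    also have "\<dots> = (-(p11^3)/27)/a1^3" by simp
    also have "\<dots> = ((r1+w)*(r1-w)/4)/((r1+w)/2)" by (simp only: key a1)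
    also have "\<dots> = ((r1-w)/2 * ((r1+w)/2))/((r1+w)/2)" by (simp add: field_simps)
    also have "\<dots> = (r1-w)/2" by (rule nonzero_mult_div_cancel_right) (use w(2) in simp)
    finally show ?thesis .
  qed
  define den where "den = b1^3 - a1^3"
  have den: "den = -w" unfolding den_def a1 b1c by (simp add: field_simps)
  have dennz: "den \<noteq> 0" using den wnz by simp
  define a2 where "a2 = (-(p12/3)*b1^2 - a1*(r2/3))/den"
  define b2 where "b2 = (b1*(r2/3) + a1^2*(p12/3))/den"
  have E1: "3*a1*b1 = -p11" unfolding b1_def using a1nz by (simp add: field_simps)
  have E2: "3*(a1*b2+a2*b1) = -p12"
  proof -
    have "3*(a1*b2+a2*b1)*den = 3*(a1*(b1*(r2/3) + a1^2*(p12/3)) + (-(p12/3)*b1^2 - a1*(r2/3))*b1)"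
      unfolding a2_def b2_def using dennz by (simp add: field_simps)
    also have "\<dots> = (-p12)*den" unfolding den_def by (simp add: field_simps power2_eq_square power3_eq_cube)
    finally have h: "3*(a1*b2+a2*b1)*den = (-p12)*den" .
    show ?thesis using mult_right_cancel[OF dennz] h by blast
  qed
  have E4: "a1^3+b1^3 = r1" unfolding a1 b1c by (simp add: field_simps)
  have E5: "3*(a1^2*a2+b1^2*b2) = r2"
  proof -
    have "3*(a1^2*a2+b1^2*b2)*den = 3*(a1^2*(-(p12/3)*b1^2 - a1*(r2/3)) + b1^2*(b1*(r2/3) + a1^2*(p12/3)))"
      unfolding a2_def b2_def using dennz by (simp add: field_simps)
    also have "\<dots> = r2*den" unfolding den_def by (simp add: field_simps power2_eq_square power3_eq_cube)
    finally have h: "3*(a1^2*a2+b1^2*b2)*den = r2*den" .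
    show ?thesis using mult_right_cancel[OF dennz] h by blast
  qed
  define q22 where "q22 = -3*a2*b2"
  define s3 where "s3 = 3*(a1*a2^2+b1*b2^2)"
  define s4 where "s4 = a2^3+b2^3"
  note F = fwd_bin[where xA=a1 and xB=a2 and xC=b1 and xD=b2]
  have P11: "-3*a1*b1 = p11" using E1 by simp
  have P12: "-3*(a1*b2+a2*b1) = p12" using E2 by simp
  have R2: "3*(a1^2*a2+b1^2*b2) = r2" using E5 by simp
  have A1': "(4*p11*q22-p12^2)*p11 - 9*r1*s3 + 3*r2^2 = 0"
    using F(1) unfolding q22_def s3_def s4_def P11 P12 E4 R2 .
  have A2': "(4*p11*q22-p12^2)*p12 - 27*r1*s4 + 3*r2*s3 = 0"
    using F(2) unfolding q22_def s3_def s4_def P11 P12 E4 R2 .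
  have B1': "p11*s3 - p12*r2 + 3*q22*r1 = 0"
    using F(3) unfolding q22_def s3_def s4_def P11 P12 E4 R2 .
  have B2': "3*p11*s4 - p12*s3 + q22*r2 = 0"
    using F(4) unfolding q22_def s3_def s4_def P11 P12 E4 R2 .
  have U: "p22 = q22 \<and> r3 = s3 \<and> r4 = s4"
    by (rule uniq_gen[OF D A1 A2 B1 B2 A1' A2' B1' B2'])
  show ?thesis unfolding sol_def
    by (intro exI[of _ a1] exI[of _ a2] exI[of _ b1] exI[of _ b2])
       (use E1 E2 E4 E5 U in \<open>auto simp: q22_def s3_def s4_def\<close>)
qed

lemma core_deg:
  fixes p11 p12 p22 r1 r2 r3 r4 :: complex
  assumes p: "p11 \<noteq> 0"
  and d0: "4*p11^3 + 27*r1^2 = 0"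
  and d1: "12*p11^2*p12 + 54*r1*r2 = 0"
  and d2: "12*p11^2*p22 + 12*p11*p12^2 + 54*r1*r3 + 27*r2^2 = 0"
  and B1: "p11*r3 - p12*r2 + 3*p22*r1 = 0"
  and B2: "3*p11*r4 - p12*r3 + p22*r2 = 0"
  shows "\<exists>a1 a2 b1 b2. sol p11 p12 p22 r1 r2 r3 r4 a1 a2 b1 b2"
proof -
  define a0 where "a0 = csqrt (-p11/3)"
  have a0: "a0^2 = -p11/3" unfolding a0_def by simp
  have "(a0^3)^2 = (r1/2)^2"
  proof -
    have "(a0^3)^2 = (a0^2)^3" by (simp add: power_mult[symmetric] mult.commute)
    also have "\<dots> = -(p11^3)/27" unfolding a0 by (simp add: power_divide)
    also have "\<dots> = (r1/2)^2"
    proof -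
      have h27: "27*r1^2 = -(4*p11^3)" using d0 by (simp add: eq_neg_iff_add_eq_0 add.commute)
      have "(r1/2)^2 = (27*r1^2)/108" by (simp add: power_divide)
      also have "\<dots> = -(4*p11^3)/108" using h27 by simp
      also have "\<dots> = -(p11^3)/27" by simp
      finally show ?thesis by simp
    qed
    finally show ?thesis .
  qed
  then have "a0^3 = r1/2 \<or> a0^3 = -(r1/2)" using power2_eq_iff by blast
  then obtain a1 where a1: "a1^2 = -p11/3" "a1^3 = r1/2"
  proof
    assume "a0^3 = r1/2" then show ?thesis using that a0 by blast
  next
    assume "a0^3 = -(r1/2)"
    then have "(-a0)^3 = r1/2" by simp
    moreover have "(-a0)^2 = -p11/3" using a0 by simp
    ultimately show ?thesis using that by blast
  qed
  have a1nz: "a1 \<noteq> 0" using a1(1) p by auto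
  define a2 where "a2 = -p12/(6*a1)"
  have P11: "p11 = -3*a1^2" using a1(1) by simp
  have P12: "p12 = -6*a1*a2" unfolding a2_def using a1nz by (simp add: field_simps)
  have R1: "r1 = 2*a1^3" proof - have "a1^3*2 = r1" using a1(2) by (simp add: field_simps) then show ?thesis by (simp add: mult.commute) qed
  have "108*a1^3*(r2 - 6*a1^2*a2) = 0" using d1 P11 P12 R1 by algebra
  then have R2: "r2 = 6*a1^2*a2" using a1nz by simp
  have e1: "12*p11^2*(p22 + 3*a2^2) + 54*r1*(r3 - 6*a1*a2^2) = 0" using d2 P11 P12 R1 R2 by algebra
  have e2: "p11*(r3 - 6*a1*a2^2) + 3*r1*(p22 + 3*a2^2) = 0" using B1 P11 P12 R1 R2 by algebra
  have "36*p11^3*(p22 + 3*a2^2) = 0" using e1 e2 d0 by algebra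
  then have P22: "p22 = -3*a2^2" using p by (simp add: add_eq_0_iff)
  have "p11*(r3 - 6*a1*a2^2) = 0" using e2 P22 by simp
  then have R3: "r3 = 6*a1*a2^2" using p by simp
  have "3*p11*(r4 - 2*a2^3) = 0" using B2 P11 P12 R2 R3 P22 by algebra
  then have R4: "r4 = 2*a2^3" using p by simp
  show ?thesis unfolding sol_def
    by (intro exI[of _ a1] exI[of _ a2] exI[of _ a1] exI[of _ a2])
       (simp add: P11 P12 P22 R1 R2 R3 R4 power2_eq_square power3_eq_cube algebra_simps)
qed

lemma shift_back:
  fixes p11 p12 p22 r1 r2 r3 r4 t a1 a2 b1 b2 :: complex
  assumes "sol (p11 + p12*t + p22*t^2) (p12 + 2*p22*t) p22 (r1 + r2*t + r3*t^2 + r4*t^3) (r2 + 2*r3*t + 3*r4*t^2) (r3 + 3*r4*t) r4 a1 a2 b1 b2"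
  shows "sol p11 p12 p22 r1 r2 r3 r4 (a1 - t*a2) a2 (b1 - t*b2) b2"
proof -
  from assms have h: "3*a1*b1 = -(p11 + p12*t + p22*t^2)" "3*(a1*b2+a2*b1) = -(p12 + 2*p22*t)"
    "3*a2*b2 = -p22" "a1^3+b1^3 = r1 + r2*t + r3*t^2 + r4*t^3"
    "3*(a1^2*a2+b1^2*b2) = r2 + 2*r3*t + 3*r4*t^2" "3*(a1*a2^2+b1*b2^2) = r3 + 3*r4*t"
    "a2^3+b2^3 = r4" unfolding sol_def by auto
  show ?thesis unfolding sol_def
  proof (intro conjI)
    show "3 * (a1 - t * a2) * (b1 - t * b2) = - p11" using h by algebra
    show "3 * ((a1 - t * a2) * b2 + a2 * (b1 - t * b2)) = - p12" using h by algebra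
    show "3 * a2 * b2 = - p22" by (fact h(3))
    show "(a1 - t * a2) ^ 3 + (b1 - t * b2) ^ 3 = r1" using h by algebra
    show "3 * ((a1 - t * a2)\<^sup>2 * a2 + (b1 - t * b2)\<^sup>2 * b2) = r2" using h by algebra
    show "3 * ((a1 - t * a2) * a2\<^sup>2 + (b1 - t * b2) * b2\<^sup>2) = r3" using h by algebra
    show "a2 ^ 3 + b2 ^ 3 = r4" by (fact h(7))
  qed
qed

lemma core:
  fixes p11 p12 p22 r1 r2 r3 r4 :: complex
  assumes A1: "(4*p11*p22-p12^2)*p11 - 9*r1*r3 + 3*r2^2 = 0"
  and A2: "(4*p11*p22-p12^2)*p12 - 27*r1*r4 + 3*r2*r3 = 0"
  and A3: "(4*p11*p22-p12^2)*p22 - 9*r2*r4 + 3*r3^2 = 0"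
  and B1: "p11*r3 - p12*r2 + 3*p22*r1 = 0"
  and B2: "3*p11*r4 - p12*r3 + p22*r2 = 0"
  shows "\<exists>a1 a2 b1 b2. sol p11 p12 p22 r1 r2 r3 r4 a1 a2 b1 b2"
proof -
  define d0 where "d0 = 4*p11^3 + 27*r1^2"
  define d1 where "d1 = 12*p11^2*p12 + 54*r1*r2"
  define d2 where "d2 = 12*p11^2*p22 + 12*p11*p12^2 + 54*r1*r3 + 27*r2^2"
  define d3 where "d3 = 24*p11*p12*p22 + 4*p12^3 + 54*r1*r4 + 54*r2*r3"
  define d4 where "d4 = 12*p11*p22^2 + 12*p12^2*p22 + 54*r2*r4 + 27*r3^2"
  define d5 where "d5 = 12*p12*p22^2 + 54*r3*r4"
  define d6 where "d6 = 4*p22^3 + 27*r4^2"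
  have shiftA: "\<And>t. (4*(p11 + p12*t + p22*t^2)*p22-(p12 + 2*p22*t)^2)*(p11 + p12*t + p22*t^2)
        - 9*(r1 + r2*t + r3*t^2 + r4*t^3)*(r3 + 3*r4*t) + 3*(r2 + 2*r3*t + 3*r4*t^2)^2 = 0"
    using A1 A2 A3 by algebra
  have shiftA2: "\<And>t. (4*(p11 + p12*t + p22*t^2)*p22-(p12 + 2*p22*t)^2)*(p12 + 2*p22*t)
        - 27*(r1 + r2*t + r3*t^2 + r4*t^3)*r4 + 3*(r2 + 2*r3*t + 3*r4*t^2)*(r3 + 3*r4*t) = 0"
    using A2 A3 by algebra
  have shiftB1: "\<And>t. (p11 + p12*t + p22*t^2)*(r3 + 3*r4*t) - (p12 + 2*p22*t)*(r2 + 2*r3*t + 3*r4*t^2)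
        + 3*p22*(r1 + r2*t + r3*t^2 + r4*t^3) = 0"
    using B1 B2 by algebra
  have shiftB2: "\<And>t. 3*(p11 + p12*t + p22*t^2)*r4 - (p12 + 2*p22*t)*(r3 + 3*r4*t) + p22*(r2 + 2*r3*t + 3*r4*t^2) = 0"
    using B2 by algebra
  show ?thesis
  proof (cases "d0 = 0 \<and> d1 = 0 \<and> d2 = 0 \<and> d3 = 0 \<and> d4 = 0 \<and> d5 = 0 \<and> d6 = 0")
    case False
    define pS where "pS = [:d0, d1, d2, d3, d4, d5, d6:]"
    have "pS \<noteq> 0" unfolding pS_def using False by simp
    then obtain t where t: "poly pS t \<noteq> 0" using ex_nonroot by blast
    have "poly pS t = 4*(p11 + p12*t + p22*t^2)^3 + 27*(r1 + r2*t + r3*t^2 + r4*t^3)^2"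
      unfolding pS_def d0_def d1_def d2_def d3_def d4_def d5_def d6_def by simp algebra
    then have D: "4*(p11 + p12*t + p22*t^2)^3 + 27*(r1 + r2*t + r3*t^2 + r4*t^3)^2 \<noteq> 0" using t by simp
    obtain a1 a2 b1 b2 where "sol (p11 + p12*t + p22*t^2) (p12 + 2*p22*t) p22 (r1 + r2*t + r3*t^2 + r4*t^3) (r2 + 2*r3*t + 3*r4*t^2) (r3 + 3*r4*t) r4 a1 a2 b1 b2"
      using core_gen[OF D shiftA[of t] shiftA2[of t] shiftB1[of t] shiftB2[of t]] by blast
    then show ?thesis using shift_back by blast
  next
    case True
    note dz = True[unfolded d0_def d1_def d2_def d3_def d4_def d5_def d6_def]
    show ?thesis
    proof (cases "p11 = 0 \<and> p12 = 0 \<and> p22 = 0")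
      case True
      have "r1 = 0" using dz True by simp
      moreover have "r2 = 0" using dz True \<open>r1 = 0\<close> by simp
      moreover have "r3 = 0" using dz True \<open>r2 = 0\<close> by simp
      moreover have "r4 = 0" using dz True by simp
      ultimately show ?thesis using True unfolding sol_def by (intro exI[of _ 0]; simp)
    next
      case False
      define pP where "pP = [:p11, p12, p22:]"
      have "pP \<noteq> 0" unfolding pP_def using False by simp
      then obtain t where t: "poly pP t \<noteq> 0" using ex_nonroot by blast
      have p: "p11 + p12*t + p22*t^2 \<noteq> 0" using t unfolding pP_def by (simp add: algebra_simps power2_eq_square)
      have e0: "4*(p11 + p12*t + p22*t^2)^3 + 27*(r1 + r2*t + r3*t^2 + r4*t^3)^2 = 0"
        using dz by algebra
      have e1: "12*(p11 + p12*t + p22*t^2)^2*(p12 + 2*p22*t) + 54*(r1 + r2*t + r3*t^2 + r4*t^3)*(r2 + 2*r3*t + 3*r4*t^2) = 0"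
        using dz by algebra
      have e2: "12*(p11 + p12*t + p22*t^2)^2*p22 + 12*(p11 + p12*t + p22*t^2)*(p12 + 2*p22*t)^2
          + 54*(r1 + r2*t + r3*t^2 + r4*t^3)*(r3 + 3*r4*t) + 27*(r2 + 2*r3*t + 3*r4*t^2)^2 = 0"
        using dz by algebra
      obtain a1 a2 b1 b2 where "sol (p11 + p12*t + p22*t^2) (p12 + 2*p22*t) p22 (r1 + r2*t + r3*t^2 + r4*t^3) (r2 + 2*r3*t + 3*r4*t^2) (r3 + 3*r4*t) r4 a1 a2 b1 b2"
        using core_deg[OF p e0 e1 e2 shiftB1[of t] shiftB2[of t]] by blast
      then show ?thesis using shift_back by blast
    qed
  qed
qed



definition cubf :: "complex \<Rightarrow> complex \<Rightarrow> complex \<Rightarrow> complex \<Rightarrow> complex \<Rightarrow> complex \<Rightarrow> complex \<Rightarrow> complex \<Rightarrow> complex \<Rightarrow> complex \<Rightarrow> poly3" where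
 "cubf c300 c210 c201 c120 c111 c102 c030 c021 c012 c003 = (\<lambda>a b c.
   if a + b + c \<noteq> 3 then 0 else if a = 3 then c300 else if a = 2 \<and> b = 1 then c210
   else if a = 2 then c201 else if a = 1 \<and> b = 2 then c120 else if a = 1 \<and> b = 1 then c111
   else if a = 1 then c102 else if b = 3 then c030 else if b = 2 then c021 else if b = 1 then c012 else c003)"

definition hom :: "nat \<Rightarrow> poly3 \<Rightarrow> bool" where
  "hom d P \<longleftrightarrow> (\<forall>a b c. a + b + c \<noteq> d \<longrightarrow> P a b c = 0)"

lemma hom_pmult: assumes "hom d P" "hom e Q" shows "hom (d+e) (pmult P Q)"
  unfolding hom_def pmult_def
proof (intro allI impI)
  fix a b c assume h: "a + b + c \<noteq> d + e"
  show "(\<Sum>a1\<le>a. \<Sum>b1\<le>b. \<Sum>c1\<le>c. P a1 b1 c1 * Q (a - a1) (b - b1) (c - c1)) = 0"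
  proof (intro sum.neutral ballI)
    fix a1 b1 c1 assume "a1 \<in> {..a}" "b1 \<in> {..b}" "c1 \<in> {..c}"
    then have le: "a1 \<le> a" "b1 \<le> b" "c1 \<le> c" by auto
    show "P a1 b1 c1 * Q (a - a1) (b - b1) (c - c1) = 0"
    proof (cases "a1 + b1 + c1 = d")
      case True
      then have "(a - a1) + (b - b1) + (c - c1) \<noteq> e" using h le by linarith
      then show ?thesis using assms(2) unfolding hom_def by simp
    next
      case False then show ?thesis using assms(1) unfolding hom_def by simp
    qed
  qed
qed

lemma hom_linform: "hom 1 (linform v1 v2 v3)"
  unfolding hom_def linform_def by auto

lemma hom_cubf: "hom 3 (cubf c300 c210 c201 c120 c111 c102 c030 c021 c012 c003)"
  unfolding hom_def cubf_def by auto

lemma sum3_cases: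
  fixes a b c :: nat
  assumes "a + b + c = 3"
  shows "(a=3\<and>b=0\<and>c=0) \<or> (a=2\<and>b=1\<and>c=0) \<or> (a=2\<and>b=0\<and>c=1) \<or> (a=1\<and>b=2\<and>c=0) \<or> (a=1\<and>b=1\<and>c=1)
       \<or> (a=1\<and>b=0\<and>c=2) \<or> (a=0\<and>b=3\<and>c=0) \<or> (a=0\<and>b=2\<and>c=1) \<or> (a=0\<and>b=1\<and>c=2) \<or> (a=0\<and>b=0\<and>c=3)"
  using assms by presburger

lemma hom3_eq:
  assumes "hom 3 P" "hom 3 Q"
    and "P 3 0 0 = Q 3 0 0" "P 2 1 0 = Q 2 1 0" "P 2 0 1 = Q 2 0 1" "P 1 2 0 = Q 1 2 0" "P 1 1 1 = Q 1 1 1"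
        "P 1 0 2 = Q 1 0 2" "P 0 3 0 = Q 0 3 0" "P 0 2 1 = Q 0 2 1" "P 0 1 2 = Q 0 1 2" "P 0 0 3 = Q 0 0 3"
  shows "P = Q"
proof (intro ext)
  fix a b c
  show "P a b c = Q a b c"
  proof (cases "a + b + c = 3")
    case True
    then show ?thesis using sum3_cases[OF True] assms(3-) by auto
  next
    case False
    then show ?thesis using assms(1,2) unfolding hom_def by simp
  qed
qed

lemma cubic_eq:
  assumes "cubic_form f"
  shows "f = cubf (f 3 0 0) (f 2 1 0) (f 2 0 1) (f 1 2 0) (f 1 1 1) (f 1 0 2) (f 0 3 0) (f 0 2 1) (f 0 1 2) (f 0 0 3)"
  by (rule hom3_eq) (use assms in \<open>auto simp: hom_def cubic_form_def hom_cubf cubf_def\<close>)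

lemma pmult3:
  "pmult (pmult (linform u1 u2 u3) (linform v1 v2 v3)) (linform w1 w2 w3) =
   cubf (u1*v1*w1) (u1*v1*w2 + u1*v2*w1 + u2*v1*w1) (u1*v1*w3 + u1*v3*w1 + u3*v1*w1)
        (u1*v2*w2 + u2*v1*w2 + u2*v2*w1) (u1*v2*w3 + u1*v3*w2 + u2*v1*w3 + u2*v3*w1 + u3*v1*w2 + u3*v2*w1)
        (u1*v3*w3 + u3*v1*w3 + u3*v3*w1) (u2*v2*w2) (u2*v2*w3 + u2*v3*w2 + u3*v2*w2)
        (u2*v3*w3 + u3*v2*w3 + u3*v3*w2) (u3*v3*w3)"
proof (rule hom3_eq)
  show "hom 3 (pmult (pmult (linform u1 u2 u3) (linform v1 v2 v3)) (linform w1 w2 w3))"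
    using hom_pmult[OF hom_pmult[OF hom_linform hom_linform] hom_linform] by (simp add: numeral_3_eq_3)
  show "hom 3 (cubf (u1*v1*w1) (u1*v1*w2 + u1*v2*w1 + u2*v1*w1) (u1*v1*w3 + u1*v3*w1 + u3*v1*w1)
        (u1*v2*w2 + u2*v1*w2 + u2*v2*w1) (u1*v2*w3 + u1*v3*w2 + u2*v1*w3 + u2*v3*w1 + u3*v1*w2 + u3*v2*w1)
        (u1*v3*w3 + u3*v1*w3 + u3*v3*w1) (u2*v2*w2) (u2*v2*w3 + u2*v3*w2 + u3*v2*w2)
        (u2*v3*w3 + u3*v2*w3 + u3*v3*w2) (u3*v3*w3))" by (rule hom_cubf)
qed (simp_all add: pmult_def linform_def cubf_def eval_nat_numeral atMost_Suc algebra_simps)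

definition hD003 :: "complex \<Rightarrow> complex \<Rightarrow> complex \<Rightarrow> complex \<Rightarrow> complex \<Rightarrow> complex \<Rightarrow> complex \<Rightarrow> complex \<Rightarrow> complex \<Rightarrow> complex \<Rightarrow> complex" where
  "hD003 c300 c210 c201 c120 c111 c102 c030 c021 c012 c003 = 12*c201*c021*c003 - 4*c201*c012^2 - 3*c111^2*c003 + 4*c111*c102*c012 - 4*c102^2*c021"

lemma hD003_eq: "hessian3 (cubf c300 c210 c201 c120 c111 c102 c030 c021 c012 c003) 0 0 3 = hD003 c300 c210 c201 c120 c111 c102 c030 c021 c012 c003"
  unfolding hD003_def
  apply (simp add: hessian3_def pdet3_def pmult_def padd_def psub_def psmult_def pderiv3_def cubf_def eval_nat_numeral atMost_Suc)
  apply (simp add: algebra_simps power2_eq_square power3_eq_cube)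
  done

definition hD201 :: "complex \<Rightarrow> complex \<Rightarrow> complex \<Rightarrow> complex \<Rightarrow> complex \<Rightarrow> complex \<Rightarrow> complex \<Rightarrow> complex \<Rightarrow> complex \<Rightarrow> complex \<Rightarrow> complex" where
  "hD201 c300 c210 c201 c120 c111 c102 c030 c021 c012 c003 = 36*c300*c120*c003 - 12*c300*c111*c012 + 12*c300*c102*c021 - 12*c210^2*c003 + 8*c210*c201*c012 - 4*c201^2*c021 - 4*c201*c120*c102 + c201*c111^2"

lemma hD201_eq: "hessian3 (cubf c300 c210 c201 c120 c111 c102 c030 c021 c012 c003) 2 0 1 = hD201 c300 c210 c201 c120 c111 c102 c030 c021 c012 c003"
  unfolding hD201_def
  apply (simp add: hessian3_def pdet3_def pmult_def padd_def psub_def psmult_def pderiv3_def cubf_def eval_nat_numeral atMost_Suc)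
  apply (simp add: algebra_simps power2_eq_square power3_eq_cube)
  done

definition hD111 :: "complex \<Rightarrow> complex \<Rightarrow> complex \<Rightarrow> complex \<Rightarrow> complex \<Rightarrow> complex \<Rightarrow> complex \<Rightarrow> complex \<Rightarrow> complex \<Rightarrow> complex \<Rightarrow> complex" where
  "hD111 c300 c210 c201 c120 c111 c102 c030 c021 c012 c003 = 108*c300*c030*c003 - 12*c300*c021*c012 - 12*c210*c120*c003 - 4*c210*c111*c012 + 12*c210*c102*c021 + 12*c201*c120*c012 - 4*c201*c111*c021 - 12*c201*c102*c030 - 4*c120*c111*c102 + c111^3"

lemma hD111_eq: "hessian3 (cubf c300 c210 c201 c120 c111 c102 c030 c021 c012 c003) 1 1 1 = hD111 c300 c210 c201 c120 c111 c102 c030 c021 c012 c003"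
  unfolding hD111_def
  apply (simp add: hessian3_def pdet3_def pmult_def padd_def psub_def psmult_def pderiv3_def cubf_def eval_nat_numeral atMost_Suc)
  apply (simp add: algebra_simps power2_eq_square power3_eq_cube)
  done

definition hD021 :: "complex \<Rightarrow> complex \<Rightarrow> complex \<Rightarrow> complex \<Rightarrow> complex \<Rightarrow> complex \<Rightarrow> complex \<Rightarrow> complex \<Rightarrow> complex \<Rightarrow> complex \<Rightarrow> complex" where
  "hD021 c300 c210 c201 c120 c111 c102 c030 c021 c012 c003 = 36*c210*c030*c003 - 4*c210*c021*c012 + 12*c201*c030*c012 - 4*c201*c021^2 - 12*c120^2*c003 + 8*c120*c102*c021 + c111^2*c021 - 12*c111*c102*c030"

lemma hD021_eq: "hessian3 (cubf c300 c210 c201 c120 c111 c102 c030 c021 c012 c003) 0 2 1 = hD021 c300 c210 c201 c120 c111 c102 c030 c021 c012 c003"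
  unfolding hD021_def
  apply (simp add: hessian3_def pdet3_def pmult_def padd_def psub_def psmult_def pderiv3_def cubf_def eval_nat_numeral atMost_Suc)
  apply (simp add: algebra_simps power2_eq_square power3_eq_cube)
  done

definition hD102 :: "complex \<Rightarrow> complex \<Rightarrow> complex \<Rightarrow> complex \<Rightarrow> complex \<Rightarrow> complex \<Rightarrow> complex \<Rightarrow> complex \<Rightarrow> complex \<Rightarrow> complex \<Rightarrow> complex" where
  "hD102 c300 c210 c201 c120 c111 c102 c030 c021 c012 c003 = 36*c300*c021*c003 - 12*c300*c012^2 - 12*c210*c111*c003 + 8*c210*c102*c012 + 12*c201*c120*c003 - 4*c201*c102*c021 - 4*c120*c102^2 + c111^2*c102"

lemma hD102_eq: "hessian3 (cubf c300 c210 c201 c120 c111 c102 c030 c021 c012 c003) 1 0 2 = hD102 c300 c210 c201 c120 c111 c102 c030 c021 c012 c003"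
  unfolding hD102_def
  apply (simp add: hessian3_def pdet3_def pmult_def padd_def psub_def psmult_def pderiv3_def cubf_def eval_nat_numeral atMost_Suc)
  apply (simp add: algebra_simps power2_eq_square power3_eq_cube)
  done

definition hD012 :: "complex \<Rightarrow> complex \<Rightarrow> complex \<Rightarrow> complex \<Rightarrow> complex \<Rightarrow> complex \<Rightarrow> complex \<Rightarrow> complex \<Rightarrow> complex \<Rightarrow> complex \<Rightarrow> complex" where
  "hD012 c300 c210 c201 c120 c111 c102 c030 c021 c012 c003 = 12*c210*c021*c003 - 4*c210*c012^2 + 36*c201*c030*c003 - 4*c201*c021*c012 - 12*c120*c111*c003 + 8*c120*c102*c012 + c111^2*c012 - 12*c102^2*c030"

lemma hD012_eq: "hessian3 (cubf c300 c210 c201 c120 c111 c102 c030 c021 c012 c003) 0 1 2 = hD012 c300 c210 c201 c120 c111 c102 c030 c021 c012 c003"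
  unfolding hD012_def
  apply (simp add: hessian3_def pdet3_def pmult_def padd_def psub_def psmult_def pderiv3_def cubf_def eval_nat_numeral atMost_Suc)
  apply (simp add: algebra_simps power2_eq_square power3_eq_cube)
  done

lemma fwd_alg:
  assumes hh: "c300 = u1*v1*w1 \<and> c210 = u1*v1*w2 + u1*v2*w1 + u2*v1*w1 \<and> c201 = u1*v1*w3 + u1*v3*w1 + u3*v1*w1 \<and> c120 = u1*v2*w2 + u2*v1*w2 + u2*v2*w1 \<and> c111 = u1*v2*w3 + u1*v3*w2 + u2*v1*w3 + u2*v3*w1 + u3*v1*w2 + u3*v2*w1 \<and> c102 = u1*v3*w3 + u3*v1*w3 + u3*v3*w1 \<and> c030 = u2*v2*w2 \<and> c021 = u2*v2*w3 + u2*v3*w2 + u3*v2*w2 \<and> c012 = u2*v3*w3 + u3*v2*w3 + u3*v3*w2 \<and> c003 = u3*v3*w3"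
  shows "hD003 c300 c210 c201 c120 c111 c102 c030 c021 c012 c003 * c201 - c003 * hD201 c300 c210 c201 c120 c111 c102 c030 c021 c012 c003 = 0 \<and> hD003 c300 c210 c201 c120 c111 c102 c030 c021 c012 c003 * c111 - c003 * hD111 c300 c210 c201 c120 c111 c102 c030 c021 c012 c003 = 0 \<and> hD003 c300 c210 c201 c120 c111 c102 c030 c021 c012 c003 * c021 - c003 * hD021 c300 c210 c201 c120 c111 c102 c030 c021 c012 c003 = 0 \<and> hD003 c300 c210 c201 c120 c111 c102 c030 c021 c012 c003 * c102 - c003 * hD102 c300 c210 c201 c120 c111 c102 c030 c021 c012 c003 = 0 \<and> hD003 c300 c210 c201 c120 c111 c102 c030 c021 c012 c003 * c012 - c003 * hD012 c300 c210 c201 c120 c111 c102 c030 c021 c012 c003 = 0"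
proof -
  note ee = hh[THEN conjunct1] hh[THEN conjunct2, THEN conjunct1] hh[THEN conjunct2, THEN conjunct2, THEN conjunct1] hh[THEN conjunct2, THEN conjunct2, THEN conjunct2, THEN conjunct1] hh[THEN conjunct2, THEN conjunct2, THEN conjunct2, THEN conjunct2, THEN conjunct1] hh[THEN conjunct2, THEN conjunct2, THEN conjunct2, THEN conjunct2, THEN conjunct2, THEN conjunct1] hh[THEN conjunct2, THEN conjunct2, THEN conjunct2, THEN conjunct2, THEN conjunct2, THEN conjunct2, THEN conjunct1] hh[THEN conjunct2, THEN conjunct2, THEN conjunct2, THEN conjunct2, THEN conjunct2, THEN conjunct2, THEN conjunct2, THEN conjunct1] hh[THEN conjunct2, THEN conjunct2, THEN conjunct2, THEN conjunct2, THEN conjunct2, THEN conjunct2, THEN conjunct2, THEN conjunct2, THEN conjunct1] hh[THEN conjunct2, THEN conjunct2, THEN conjunct2, THEN conjunct2, THEN conjunct2, THEN conjunct2, THEN conjunct2, THEN conjunct2, THEN conjunct2]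
  have H003: "hD003 (u1*v1*w1) (u1*v1*w2 + u1*v2*w1 + u2*v1*w1) (u1*v1*w3 + u1*v3*w1 + u3*v1*w1) (u1*v2*w2 + u2*v1*w2 + u2*v2*w1) (u1*v2*w3 + u1*v3*w2 + u2*v1*w3 + u2*v3*w1 + u3*v1*w2 + u3*v2*w1) (u1*v3*w3 + u3*v1*w3 + u3*v3*w1) (u2*v2*w2) (u2*v2*w3 + u2*v3*w2 + u3*v2*w2) (u2*v3*w3 + u3*v2*w3 + u3*v3*w2) (u3*v3*w3) = (u1*(v2*w3-v3*w2) - u2*(v1*w3-v3*w1) + u3*(v1*w2-v2*w1))^2 * (u3*v3*w3)"
    unfolding hD003_def by algebra
  have H201: "hD201 (u1*v1*w1) (u1*v1*w2 + u1*v2*w1 + u2*v1*w1) (u1*v1*w3 + u1*v3*w1 + u3*v1*w1) (u1*v2*w2 + u2*v1*w2 + u2*v2*w1) (u1*v2*w3 + u1*v3*w2 + u2*v1*w3 + u2*v3*w1 + u3*v1*w2 + u3*v2*w1) (u1*v3*w3 + u3*v1*w3 + u3*v3*w1) (u2*v2*w2) (u2*v2*w3 + u2*v3*w2 + u3*v2*w2) (u2*v3*w3 + u3*v2*w3 + u3*v3*w2) (u3*v3*w3) = (u1*(v2*w3-v3*w2) - u2*(v1*w3-v3*w1) + u3*(v1*w2-v2*w1))^2 * (u1*v1*w3 + u1*v3*w1 + u3*v1*w1)"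
    unfolding hD201_def by algebra
  have H111: "hD111 (u1*v1*w1) (u1*v1*w2 + u1*v2*w1 + u2*v1*w1) (u1*v1*w3 + u1*v3*w1 + u3*v1*w1) (u1*v2*w2 + u2*v1*w2 + u2*v2*w1) (u1*v2*w3 + u1*v3*w2 + u2*v1*w3 + u2*v3*w1 + u3*v1*w2 + u3*v2*w1) (u1*v3*w3 + u3*v1*w3 + u3*v3*w1) (u2*v2*w2) (u2*v2*w3 + u2*v3*w2 + u3*v2*w2) (u2*v3*w3 + u3*v2*w3 + u3*v3*w2) (u3*v3*w3) = (u1*(v2*w3-v3*w2) - u2*(v1*w3-v3*w1) + u3*(v1*w2-v2*w1))^2 * (u1*v2*w3 + u1*v3*w2 + u2*v1*w3 + u2*v3*w1 + u3*v1*w2 + u3*v2*w1)"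
    unfolding hD111_def by algebra
  have H021: "hD021 (u1*v1*w1) (u1*v1*w2 + u1*v2*w1 + u2*v1*w1) (u1*v1*w3 + u1*v3*w1 + u3*v1*w1) (u1*v2*w2 + u2*v1*w2 + u2*v2*w1) (u1*v2*w3 + u1*v3*w2 + u2*v1*w3 + u2*v3*w1 + u3*v1*w2 + u3*v2*w1) (u1*v3*w3 + u3*v1*w3 + u3*v3*w1) (u2*v2*w2) (u2*v2*w3 + u2*v3*w2 + u3*v2*w2) (u2*v3*w3 + u3*v2*w3 + u3*v3*w2) (u3*v3*w3) = (u1*(v2*w3-v3*w2) - u2*(v1*w3-v3*w1) + u3*(v1*w2-v2*w1))^2 * (u2*v2*w3 + u2*v3*w2 + u3*v2*w2)"
    unfolding hD021_def by algebra
  have H102: "hD102 (u1*v1*w1) (u1*v1*w2 + u1*v2*w1 + u2*v1*w1) (u1*v1*w3 + u1*v3*w1 + u3*v1*w1) (u1*v2*w2 + u2*v1*w2 + u2*v2*w1) (u1*v2*w3 + u1*v3*w2 + u2*v1*w3 + u2*v3*w1 + u3*v1*w2 + u3*v2*w1) (u1*v3*w3 + u3*v1*w3 + u3*v3*w1) (u2*v2*w2) (u2*v2*w3 + u2*v3*w2 + u3*v2*w2) (u2*v3*w3 + u3*v2*w3 + u3*v3*w2) (u3*v3*w3) = (u1*(v2*w3-v3*w2) - u2*(v1*w3-v3*w1) + u3*(v1*w2-v2*w1))^2 * (u1*v3*w3 + u3*v1*w3 + u3*v3*w1)"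
    unfolding hD102_def by algebra
  have H012: "hD012 (u1*v1*w1) (u1*v1*w2 + u1*v2*w1 + u2*v1*w1) (u1*v1*w3 + u1*v3*w1 + u3*v1*w1) (u1*v2*w2 + u2*v1*w2 + u2*v2*w1) (u1*v2*w3 + u1*v3*w2 + u2*v1*w3 + u2*v3*w1 + u3*v1*w2 + u3*v2*w1) (u1*v3*w3 + u3*v1*w3 + u3*v3*w1) (u2*v2*w2) (u2*v2*w3 + u2*v3*w2 + u3*v2*w2) (u2*v3*w3 + u3*v2*w3 + u3*v3*w2) (u3*v3*w3) = (u1*(v2*w3-v3*w2) - u2*(v1*w3-v3*w1) + u3*(v1*w2-v2*w1))^2 * (u2*v3*w3 + u3*v2*w3 + u3*v3*w2)"
    unfolding hD012_def by algebra
  have GG0: "hD003 c300 c210 c201 c120 c111 c102 c030 c021 c012 c003 * c201 - c003 * hD201 c300 c210 c201 c120 c111 c102 c030 c021 c012 c003 = 0"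
    unfolding ee H003 H201 by algebra
  have GG1: "hD003 c300 c210 c201 c120 c111 c102 c030 c021 c012 c003 * c111 - c003 * hD111 c300 c210 c201 c120 c111 c102 c030 c021 c012 c003 = 0"
    unfolding ee H003 H111 by algebra
  have GG2: "hD003 c300 c210 c201 c120 c111 c102 c030 c021 c012 c003 * c021 - c003 * hD021 c300 c210 c201 c120 c111 c102 c030 c021 c012 c003 = 0"
    unfolding ee H003 H021 by algebra
  have GG3: "hD003 c300 c210 c201 c120 c111 c102 c030 c021 c012 c003 * c102 - c003 * hD102 c300 c210 c201 c120 c111 c102 c030 c021 c012 c003 = 0"
    unfolding ee H003 H102 by algebra
  have GG4: "hD003 c300 c210 c201 c120 c111 c102 c030 c021 c012 c003 * c012 - c003 * hD012 c300 c210 c201 c120 c111 c102 c030 c021 c012 c003 = 0"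
    unfolding ee H003 H012 by algebra
  show ?thesis using GG0 GG1 GG2 GG3 GG4 by blast
qed

lemma prod_expand:
  fixes om LA LB S p11 p12 p22 r1 r2 r3 r4 a1 a2 b1 b2 :: complex
  assumes om: "om^2+om+1 = 0" and so: "sol p11 p12 p22 r1 r2 r3 r4 a1 a2 b1 b2"
  shows "(LA+a1+b1)*(LA+om*a1+om^2*b1)*(LA+om^2*a1+om*b1) = LA^3+p11*LA+r1"
    "(LA+a1+b1)*(LA+om*a1+om^2*b1)*(LB+om^2*a2+om*b2) + (LA+a1+b1)*(LB+om*a2+om^2*b2)*(LA+om^2*a1+om*b1) + (LB+a2+b2)*(LA+om*a1+om^2*b1)*(LA+om^2*a1+om*b1) = 3*LA^2*LB+p11*LB+p12*LA+r2"
    "(LA+a1+b1)*(LA+om*a1+om^2*b1)*(S) + (LA+a1+b1)*(S)*(LA+om^2*a1+om*b1) + (S)*(LA+om*a1+om^2*b1)*(LA+om^2*a1+om*b1) = 3*LA^2*S+p11*S"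
    "(LA+a1+b1)*(LB+om*a2+om^2*b2)*(LB+om^2*a2+om*b2) + (LB+a2+b2)*(LA+om*a1+om^2*b1)*(LB+om^2*a2+om*b2) + (LB+a2+b2)*(LB+om*a2+om^2*b2)*(LA+om^2*a1+om*b1) = 3*LA*LB^2+p12*LB+p22*LA+r3"
    "(LA+a1+b1)*(LB+om*a2+om^2*b2)*(S) + (LA+a1+b1)*(S)*(LB+om^2*a2+om*b2) + (LB+a2+b2)*(LA+om*a1+om^2*b1)*(S) + (LB+a2+b2)*(S)*(LA+om^2*a1+om*b1) + (S)*(LA+om*a1+om^2*b1)*(LB+om^2*a2+om*b2) + (S)*(LB+om*a2+om^2*b2)*(LA+om^2*a1+om*b1) = 6*LA*LB*S+p12*S"
    "(LA+a1+b1)*(S)*(S) + (S)*(LA+om*a1+om^2*b1)*(S) + (S)*(S)*(LA+om^2*a1+om*b1) = 3*LA*S^2"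
    "(LB+a2+b2)*(LB+om*a2+om^2*b2)*(LB+om^2*a2+om*b2) = LB^3+p22*LB+r4"
    "(LB+a2+b2)*(LB+om*a2+om^2*b2)*(S) + (LB+a2+b2)*(S)*(LB+om^2*a2+om*b2) + (S)*(LB+om*a2+om^2*b2)*(LB+om^2*a2+om*b2) = 3*LB^2*S+p22*S"
    "(LB+a2+b2)*(S)*(S) + (S)*(LB+om*a2+om^2*b2)*(S) + (S)*(S)*(LB+om^2*a2+om*b2) = 3*LB*S^2"
    "(S)*(S)*(S) = S^3"
proof -
  from so have h: "3*a1*b1 = -p11" "3*(a1*b2+a2*b1) = -p12" "3*a2*b2 = -p22"
    "a1^3+b1^3 = r1" "3*(a1^2*a2+b1^2*b2) = r2" "3*(a1*a2^2+b1*b2^2) = r3" "a2^3+b2^3 = r4"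
    unfolding sol_def by auto
  show "(LA+a1+b1)*(LA+om*a1+om^2*b1)*(LA+om^2*a1+om*b1) = LA^3+p11*LA+r1"
    "(LA+a1+b1)*(LA+om*a1+om^2*b1)*(LB+om^2*a2+om*b2) + (LA+a1+b1)*(LB+om*a2+om^2*b2)*(LA+om^2*a1+om*b1) + (LB+a2+b2)*(LA+om*a1+om^2*b1)*(LA+om^2*a1+om*b1) = 3*LA^2*LB+p11*LB+p12*LA+r2"
    "(LA+a1+b1)*(LA+om*a1+om^2*b1)*(S) + (LA+a1+b1)*(S)*(LA+om^2*a1+om*b1) + (S)*(LA+om*a1+om^2*b1)*(LA+om^2*a1+om*b1) = 3*LA^2*S+p11*S"
    "(LA+a1+b1)*(LB+om*a2+om^2*b2)*(LB+om^2*a2+om*b2) + (LB+a2+b2)*(LA+om*a1+om^2*b1)*(LB+om^2*a2+om*b2) + (LB+a2+b2)*(LB+om*a2+om^2*b2)*(LA+om^2*a1+om*b1) = 3*LA*LB^2+p12*LB+p22*LA+r3"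
    "(LA+a1+b1)*(LB+om*a2+om^2*b2)*(S) + (LA+a1+b1)*(S)*(LB+om^2*a2+om*b2) + (LB+a2+b2)*(LA+om*a1+om^2*b1)*(S) + (LB+a2+b2)*(S)*(LA+om^2*a1+om*b1) + (S)*(LA+om*a1+om^2*b1)*(LB+om^2*a2+om*b2) + (S)*(LB+om*a2+om^2*b2)*(LA+om^2*a1+om*b1) = 6*LA*LB*S+p12*S"
    "(LA+a1+b1)*(S)*(S) + (S)*(LA+om*a1+om^2*b1)*(S) + (S)*(S)*(LA+om^2*a1+om*b1) = 3*LA*S^2"
    "(LB+a2+b2)*(LB+om*a2+om^2*b2)*(LB+om^2*a2+om*b2) = LB^3+p22*LB+r4"
    "(LB+a2+b2)*(LB+om*a2+om^2*b2)*(S) + (LB+a2+b2)*(S)*(LB+om^2*a2+om*b2) + (S)*(LB+om*a2+om^2*b2)*(LB+om^2*a2+om*b2) = 3*LB^2*S+p22*S"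
    "(LB+a2+b2)*(S)*(S) + (S)*(LB+om*a2+om^2*b2)*(S) + (S)*(S)*(LB+om^2*a2+om*b2) = 3*LB*S^2"
    "(S)*(S)*(S) = S^3"
    using om h by (algebra+)[9] (simp add: power3_eq_cube)
qed

lemma zero_of_4: "4*(x::complex) = y \<Longrightarrow> y = 0 \<Longrightarrow> x = 0" by simp

lemma scale_back: "k*K = (1::complex) \<Longrightarrow> X = K*c \<Longrightarrow> Y = k*X \<Longrightarrow> c = Y"
  by (metis mult.assoc mult_1)

lemma conv_alg:
  fixes c300 c210 c201 c120 c111 c102 c030 c021 c012 c003 :: complex
  assumes s: "c003 \<noteq> 0"
    and g1: "hD003 c300 c210 c201 c120 c111 c102 c030 c021 c012 c003 * c201 - c003 * hD201 c300 c210 c201 c120 c111 c102 c030 c021 c012 c003 = 0" and g2: "hD003 c300 c210 c201 c120 c111 c102 c030 c021 c012 c003 * c111 - c003 * hD111 c300 c210 c201 c120 c111 c102 c030 c021 c012 c003 = 0" and g3: "hD003 c300 c210 c201 c120 c111 c102 c030 c021 c012 c003 * c021 - c003 * hD021 c300 c210 c201 c120 c111 c102 c030 c021 c012 c003 = 0"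
    and g4: "hD003 c300 c210 c201 c120 c111 c102 c030 c021 c012 c003 * c102 - c003 * hD102 c300 c210 c201 c120 c111 c102 c030 c021 c012 c003 = 0" and g5: "hD003 c300 c210 c201 c120 c111 c102 c030 c021 c012 c003 * c012 - c003 * hD012 c300 c210 c201 c120 c111 c102 c030 c021 c012 c003 = 0"
  shows "\<exists>u1 u2 u3 v1 v2 v3 w1 w2 w3. c300 = u1*v1*w1 \<and> c210 = u1*v1*w2 + u1*v2*w1 + u2*v1*w1 \<and> c201 = u1*v1*w3 + u1*v3*w1 + u3*v1*w1 \<and> c120 = u1*v2*w2 + u2*v1*w2 + u2*v2*w1 \<and> c111 = u1*v2*w3 + u1*v3*w2 + u2*v1*w3 + u2*v3*w1 + u3*v1*w2 + u3*v2*w1 \<and> c102 = u1*v3*w3 + u3*v1*w3 + u3*v3*w1 \<and> c030 = u2*v2*w2 \<and> c021 = u2*v2*w3 + u2*v3*w2 + u3*v2*w2 \<and> c012 = u2*v3*w3 + u3*v2*w3 + u3*v3*w2 \<and> c003 = u3*v3*w3"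
proof -
  define pn11 where "pn11 = 3*c003*c201 - c102^2"
  define pn12 where "pn12 = 3*c003*c111 - 2*c102*c012"
  define pn22 where "pn22 = 3*c003*c021 - c012^2"
  define rn1 where "rn1 = 27*c003^2*c300 - c102^3 - 3*pn11*c102"
  define rn2 where "rn2 = 27*c003^2*c210 - 3*c102^2*c012 - 3*(pn11*c012 + pn12*c102)"
  define rn3 where "rn3 = 27*c003^2*c120 - 3*c102*c012^2 - 3*(pn12*c012 + pn22*c102)"
  define rn4 where "rn4 = 27*c003^2*c030 - c012^3 - 3*pn22*c012"
  define P11 where "P11 = 3*pn11"
  define P12 where "P12 = 3*pn12"
  define P22 where "P22 = 3*pn22"
  note defs = P11_def P12_def P22_def pn11_def pn12_def pn22_def rn1_def rn2_def rn3_def rn4_def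
    hD003_def hD201_def hD111_def hD021_def hD102_def hD012_def
  have A1: "(4*P11*P22-P12^2)*P11 - 9*rn1*rn3 + 3*rn2^2 = 0"
  proof -
    have "4*((4*P11*P22-P12^2)*P11 - 9*rn1*rn3 + 3*rn2^2) = 729*c003^2*(hD003 c300 c210 c201 c120 c111 c102 c030 c021 c012 c003 * c201 - c003 * hD201 c300 c210 c201 c120 c111 c102 c030 c021 c012 c003) - 486*c003*c102*(hD003 c300 c210 c201 c120 c111 c102 c030 c021 c012 c003 * c102 - c003 * hD102 c300 c210 c201 c120 c111 c102 c030 c021 c012 c003)"
      unfolding defs by algebra
    then show ?thesis by (rule zero_of_4) (unfold g1 g4, simp)
  qed
  have A2: "(4*P11*P22-P12^2)*P12 - 27*rn1*rn4 + 3*rn2*rn3 = 0"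
  proof -
    have "4*((4*P11*P22-P12^2)*P12 - 27*rn1*rn4 + 3*rn2*rn3) = 729*c003^2*(hD003 c300 c210 c201 c120 c111 c102 c030 c021 c012 c003 * c111 - c003 * hD111 c300 c210 c201 c120 c111 c102 c030 c021 c012 c003) - 486*c003*(c012*(hD003 c300 c210 c201 c120 c111 c102 c030 c021 c012 c003 * c102 - c003 * hD102 c300 c210 c201 c120 c111 c102 c030 c021 c012 c003) + c102*(hD003 c300 c210 c201 c120 c111 c102 c030 c021 c012 c003 * c012 - c003 * hD012 c300 c210 c201 c120 c111 c102 c030 c021 c012 c003))"
      unfolding defs by algebra
    then show ?thesis by (rule zero_of_4) (unfold g2 g4 g5, simp)
  qed
  have A3: "(4*P11*P22-P12^2)*P22 - 9*rn2*rn4 + 3*rn3^2 = 0"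
  proof -
    have "4*((4*P11*P22-P12^2)*P22 - 9*rn2*rn4 + 3*rn3^2) = 729*c003^2*(hD003 c300 c210 c201 c120 c111 c102 c030 c021 c012 c003 * c021 - c003 * hD021 c300 c210 c201 c120 c111 c102 c030 c021 c012 c003) - 486*c003*c012*(hD003 c300 c210 c201 c120 c111 c102 c030 c021 c012 c003 * c012 - c003 * hD012 c300 c210 c201 c120 c111 c102 c030 c021 c012 c003)"
      unfolding defs by algebra
    then show ?thesis by (rule zero_of_4) (unfold g3 g5, simp)
  qed
  have B1: "P11*rn3 - P12*rn2 + 3*P22*rn1 = 0"
  proof -
    have "4*(P11*rn3 - P12*rn2 + 3*P22*rn1) = -81*c003*(hD003 c300 c210 c201 c120 c111 c102 c030 c021 c012 c003 * c102 - c003 * hD102 c300 c210 c201 c120 c111 c102 c030 c021 c012 c003)"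
      unfolding defs by algebra
    then show ?thesis by (rule zero_of_4) (unfold g4, simp)
  qed
  have B2: "3*P11*rn4 - P12*rn3 + P22*rn2 = 0"
  proof -
    have "4*(3*P11*rn4 - P12*rn3 + P22*rn2) = -81*c003*(hD003 c300 c210 c201 c120 c111 c102 c030 c021 c012 c003 * c012 - c003 * hD012 c300 c210 c201 c120 c111 c102 c030 c021 c012 c003)"
      unfolding defs by algebra
    then show ?thesis by (rule zero_of_4) (unfold g5, simp)
  qed
  obtain a1 a2 b1 b2 where so: "sol P11 P12 P22 rn1 rn2 rn3 rn4 a1 a2 b1 b2"
    using core[OF A1 A2 A3 B1 B2] by blast
  define om where "om = (-1 + csqrt (-3)) / (2::complex)"
  have om: "om^2 + om + 1 = 0"
  proof -
    have "4*(om^2 + om + 1) = (csqrt (-3))^2 + 3" unfolding om_def by (simp add: power2_eq_square field_simps)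
    also have "\<dots> = 0" by (subst power2_csqrt) simp
    finally show ?thesis by (rule zero_of_4) (rule refl)
  qed
  define K where "K = 27*c003^2"
  define k where "k = 1/K"
  have kK: "k*K = 1" unfolding k_def K_def using s by simp

  have PE300: "(c102+a1+b1)*(c102+om*a1+om^2*b1)*(c102+om^2*a1+om*b1) = c102^3+P11*c102+rn1" by (rule prod_expand(1)[OF om so])
  have PE210: "(c102+a1+b1)*(c102+om*a1+om^2*b1)*(c012+om^2*a2+om*b2) + (c102+a1+b1)*(c012+om*a2+om^2*b2)*(c102+om^2*a1+om*b1) + (c012+a2+b2)*(c102+om*a1+om^2*b1)*(c102+om^2*a1+om*b1) = 3*c102^2*c012+P11*c012+P12*c102+rn2" by (rule prod_expand(2)[OF om so])
  have PE201: "(c102+a1+b1)*(c102+om*a1+om^2*b1)*((3*c003)) + (c102+a1+b1)*((3*c003))*(c102+om^2*a1+om*b1) + ((3*c003))*(c102+om*a1+om^2*b1)*(c102+om^2*a1+om*b1) = 3*c102^2*(3*c003)+P11*(3*c003)" by (rule prod_expand(3)[OF om so])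
  have PE120: "(c102+a1+b1)*(c012+om*a2+om^2*b2)*(c012+om^2*a2+om*b2) + (c012+a2+b2)*(c102+om*a1+om^2*b1)*(c012+om^2*a2+om*b2) + (c012+a2+b2)*(c012+om*a2+om^2*b2)*(c102+om^2*a1+om*b1) = 3*c102*c012^2+P12*c012+P22*c102+rn3" by (rule prod_expand(4)[OF om so])
  have PE111: "(c102+a1+b1)*(c012+om*a2+om^2*b2)*((3*c003)) + (c102+a1+b1)*((3*c003))*(c012+om^2*a2+om*b2) + (c012+a2+b2)*(c102+om*a1+om^2*b1)*((3*c003)) + (c012+a2+b2)*((3*c003))*(c102+om^2*a1+om*b1) + ((3*c003))*(c102+om*a1+om^2*b1)*(c012+om^2*a2+om*b2) + ((3*c003))*(c012+om*a2+om^2*b2)*(c102+om^2*a1+om*b1) = 6*c102*c012*(3*c003)+P12*(3*c003)" by (rule prod_expand(5)[OF om so])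
  have PE102: "(c102+a1+b1)*((3*c003))*((3*c003)) + ((3*c003))*(c102+om*a1+om^2*b1)*((3*c003)) + ((3*c003))*((3*c003))*(c102+om^2*a1+om*b1) = 3*c102*(3*c003)^2" by (rule prod_expand(6)[OF om so])
  have PE030: "(c012+a2+b2)*(c012+om*a2+om^2*b2)*(c012+om^2*a2+om*b2) = c012^3+P22*c012+rn4" by (rule prod_expand(7)[OF om so])
  have PE021: "(c012+a2+b2)*(c012+om*a2+om^2*b2)*((3*c003)) + (c012+a2+b2)*((3*c003))*(c012+om^2*a2+om*b2) + ((3*c003))*(c012+om*a2+om^2*b2)*(c012+om^2*a2+om*b2) = 3*c012^2*(3*c003)+P22*(3*c003)" by (rule prod_expand(8)[OF om so])
  have PE012: "(c012+a2+b2)*((3*c003))*((3*c003)) + ((3*c003))*(c012+om*a2+om^2*b2)*((3*c003)) + ((3*c003))*((3*c003))*(c012+om^2*a2+om*b2) = 3*c012*(3*c003)^2" by (rule prod_expand(9)[OF om so])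
  have PE003: "((3*c003))*((3*c003))*((3*c003)) = (3*c003)^3" by (rule prod_expand(10)[OF om so])
  have W300: "c300 = (k*(c102+a1+b1))*(c102+om*a1+om^2*b1)*(c102+om^2*a1+om*b1)"
  proof (rule scale_back[OF kK])
    show "c102^3+P11*c102+rn1 = K*c300" unfolding defs K_def by algebra
    show "(k*(c102+a1+b1))*(c102+om*a1+om^2*b1)*(c102+om^2*a1+om*b1) = k*(c102^3+P11*c102+rn1)" unfolding PE300[symmetric] by algebra
  qed
  have W210: "c210 = (k*(c102+a1+b1))*(c102+om*a1+om^2*b1)*(c012+om^2*a2+om*b2) + (k*(c102+a1+b1))*(c012+om*a2+om^2*b2)*(c102+om^2*a1+om*b1) + (k*(c012+a2+b2))*(c102+om*a1+om^2*b1)*(c102+om^2*a1+om*b1)"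
  proof (rule scale_back[OF kK])
    show "3*c102^2*c012+P11*c012+P12*c102+rn2 = K*c210" unfolding defs K_def by algebra
    show "(k*(c102+a1+b1))*(c102+om*a1+om^2*b1)*(c012+om^2*a2+om*b2) + (k*(c102+a1+b1))*(c012+om*a2+om^2*b2)*(c102+om^2*a1+om*b1) + (k*(c012+a2+b2))*(c102+om*a1+om^2*b1)*(c102+om^2*a1+om*b1) = k*(3*c102^2*c012+P11*c012+P12*c102+rn2)" unfolding PE210[symmetric] by algebra
  qed
  have W201: "c201 = (k*(c102+a1+b1))*(c102+om*a1+om^2*b1)*(3*c003) + (k*(c102+a1+b1))*(3*c003)*(c102+om^2*a1+om*b1) + (k*(3*c003))*(c102+om*a1+om^2*b1)*(c102+om^2*a1+om*b1)"
  proof (rule scale_back[OF kK])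
    show "3*c102^2*(3*c003)+P11*(3*c003) = K*c201" unfolding defs K_def by algebra
    show "(k*(c102+a1+b1))*(c102+om*a1+om^2*b1)*(3*c003) + (k*(c102+a1+b1))*(3*c003)*(c102+om^2*a1+om*b1) + (k*(3*c003))*(c102+om*a1+om^2*b1)*(c102+om^2*a1+om*b1) = k*(3*c102^2*(3*c003)+P11*(3*c003))" unfolding PE201[symmetric] by algebra
  qed
  have W120: "c120 = (k*(c102+a1+b1))*(c012+om*a2+om^2*b2)*(c012+om^2*a2+om*b2) + (k*(c012+a2+b2))*(c102+om*a1+om^2*b1)*(c012+om^2*a2+om*b2) + (k*(c012+a2+b2))*(c012+om*a2+om^2*b2)*(c102+om^2*a1+om*b1)"
  proof (rule scale_back[OF kK])
    show "3*c102*c012^2+P12*c012+P22*c102+rn3 = K*c120" unfolding defs K_def by algebra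
    show "(k*(c102+a1+b1))*(c012+om*a2+om^2*b2)*(c012+om^2*a2+om*b2) + (k*(c012+a2+b2))*(c102+om*a1+om^2*b1)*(c012+om^2*a2+om*b2) + (k*(c012+a2+b2))*(c012+om*a2+om^2*b2)*(c102+om^2*a1+om*b1) = k*(3*c102*c012^2+P12*c012+P22*c102+rn3)" unfolding PE120[symmetric] by algebra
  qed
  have W111: "c111 = (k*(c102+a1+b1))*(c012+om*a2+om^2*b2)*(3*c003) + (k*(c102+a1+b1))*(3*c003)*(c012+om^2*a2+om*b2) + (k*(c012+a2+b2))*(c102+om*a1+om^2*b1)*(3*c003) + (k*(c012+a2+b2))*(3*c003)*(c102+om^2*a1+om*b1) + (k*(3*c003))*(c102+om*a1+om^2*b1)*(c012+om^2*a2+om*b2) + (k*(3*c003))*(c012+om*a2+om^2*b2)*(c102+om^2*a1+om*b1)"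
  proof (rule scale_back[OF kK])
    show "6*c102*c012*(3*c003)+P12*(3*c003) = K*c111" unfolding defs K_def by algebra
    show "(k*(c102+a1+b1))*(c012+om*a2+om^2*b2)*(3*c003) + (k*(c102+a1+b1))*(3*c003)*(c012+om^2*a2+om*b2) + (k*(c012+a2+b2))*(c102+om*a1+om^2*b1)*(3*c003) + (k*(c012+a2+b2))*(3*c003)*(c102+om^2*a1+om*b1) + (k*(3*c003))*(c102+om*a1+om^2*b1)*(c012+om^2*a2+om*b2) + (k*(3*c003))*(c012+om*a2+om^2*b2)*(c102+om^2*a1+om*b1) = k*(6*c102*c012*(3*c003)+P12*(3*c003))" unfolding PE111[symmetric] by algebra
  qed
  have W102: "c102 = (k*(c102+a1+b1))*(3*c003)*(3*c003) + (k*(3*c003))*(c102+om*a1+om^2*b1)*(3*c003) + (k*(3*c003))*(3*c003)*(c102+om^2*a1+om*b1)"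
  proof (rule scale_back[OF kK])
    show "3*c102*(3*c003)^2 = K*c102" unfolding defs K_def by algebra
    show "(k*(c102+a1+b1))*(3*c003)*(3*c003) + (k*(3*c003))*(c102+om*a1+om^2*b1)*(3*c003) + (k*(3*c003))*(3*c003)*(c102+om^2*a1+om*b1) = k*(3*c102*(3*c003)^2)" unfolding PE102[symmetric] by algebra
  qed
  have W030: "c030 = (k*(c012+a2+b2))*(c012+om*a2+om^2*b2)*(c012+om^2*a2+om*b2)"
  proof (rule scale_back[OF kK])
    show "c012^3+P22*c012+rn4 = K*c030" unfolding defs K_def by algebra
    show "(k*(c012+a2+b2))*(c012+om*a2+om^2*b2)*(c012+om^2*a2+om*b2) = k*(c012^3+P22*c012+rn4)" unfolding PE030[symmetric] by algebra
  qed
  have W021: "c021 = (k*(c012+a2+b2))*(c012+om*a2+om^2*b2)*(3*c003) + (k*(c012+a2+b2))*(3*c003)*(c012+om^2*a2+om*b2) + (k*(3*c003))*(c012+om*a2+om^2*b2)*(c012+om^2*a2+om*b2)"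
  proof (rule scale_back[OF kK])
    show "3*c012^2*(3*c003)+P22*(3*c003) = K*c021" unfolding defs K_def by algebra
    show "(k*(c012+a2+b2))*(c012+om*a2+om^2*b2)*(3*c003) + (k*(c012+a2+b2))*(3*c003)*(c012+om^2*a2+om*b2) + (k*(3*c003))*(c012+om*a2+om^2*b2)*(c012+om^2*a2+om*b2) = k*(3*c012^2*(3*c003)+P22*(3*c003))" unfolding PE021[symmetric] by algebra
  qed
  have W012: "c012 = (k*(c012+a2+b2))*(3*c003)*(3*c003) + (k*(3*c003))*(c012+om*a2+om^2*b2)*(3*c003) + (k*(3*c003))*(3*c003)*(c012+om^2*a2+om*b2)"
  proof (rule scale_back[OF kK])
    show "3*c012*(3*c003)^2 = K*c012" unfolding defs K_def by algebra
    show "(k*(c012+a2+b2))*(3*c003)*(3*c003) + (k*(3*c003))*(c012+om*a2+om^2*b2)*(3*c003) + (k*(3*c003))*(3*c003)*(c012+om^2*a2+om*b2) = k*(3*c012*(3*c003)^2)" unfolding PE012[symmetric] by algebra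
  qed
  have W003: "c003 = (k*(3*c003))*(3*c003)*(3*c003)"
  proof (rule scale_back[OF kK])
    show "(3*c003)^3 = K*c003" unfolding defs K_def by algebra
    show "(k*(3*c003))*(3*c003)*(3*c003) = k*((3*c003)^3)" unfolding PE003[symmetric] by algebra
  qed
  show ?thesis
    apply (rule exI[of _ "k*(c102+a1+b1)"])
    apply (rule exI[of _ "k*(c012+a2+b2)"])
    apply (rule exI[of _ "k*(3*c003)"])
    apply (rule exI[of _ "c102+om*a1+om^2*b1"])
    apply (rule exI[of _ "c012+om*a2+om^2*b2"])
    apply (rule exI[of _ "3*c003"])
    apply (rule exI[of _ "c102+om^2*a1+om*b1"])
    apply (rule exI[of _ "c012+om^2*a2+om*b2"])
    apply (rule exI[of _ "3*c003"])
    by (rule conjI[OF W300 conjI[OF W210 conjI[OF W201 conjI[OF W120 conjI[OF W111 conjI[OF W102 conjI[OF W030 conjI[OF W021 conjI[OF W012 W003]]]]]]]]])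
qed


lemma part2_alg:
  fixes c300 c210 c201 c120 c111 c102 c030 c021 c012 c003 :: complex
  assumes d: "4*c201*c021 - c111^2 \<noteq> 0"
    and g1: "hD003 c300 c210 c201 c120 c111 c102 c030 c021 c012 c003 * c201 - c003 * hD201 c300 c210 c201 c120 c111 c102 c030 c021 c012 c003 = 0" and g2: "hD003 c300 c210 c201 c120 c111 c102 c030 c021 c012 c003 * c111 - c003 * hD111 c300 c210 c201 c120 c111 c102 c030 c021 c012 c003 = 0" and g3: "hD003 c300 c210 c201 c120 c111 c102 c030 c021 c012 c003 * c021 - c003 * hD021 c300 c210 c201 c120 c111 c102 c030 c021 c012 c003 = 0"
  shows "hD003 c300 c210 c201 c120 c111 c102 c030 c021 c012 c003 * c102 - c003 * hD102 c300 c210 c201 c120 c111 c102 c030 c021 c012 c003 = 0 \<and> hD003 c300 c210 c201 c120 c111 c102 c030 c021 c012 c003 * c012 - c003 * hD012 c300 c210 c201 c120 c111 c102 c030 c021 c012 c003 = 0"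
proof -
  have "(4*c201*c021 - c111^2)*(hD003 c300 c210 c201 c120 c111 c102 c030 c021 c012 c003 * c102 - c003 * hD102 c300 c210 c201 c120 c111 c102 c030 c021 c012 c003) = (-3*c003*c120 + 3*c102*c021 - c012*c111)*(hD003 c300 c210 c201 c120 c111 c102 c030 c021 c012 c003 * c201 - c003 * hD201 c300 c210 c201 c120 c111 c102 c030 c021 c012 c003) + (3*c003*c210 - c102*c111 + c012*c201)*(hD003 c300 c210 c201 c120 c111 c102 c030 c021 c012 c003 * c111 - c003 * hD111 c300 c210 c201 c120 c111 c102 c030 c021 c012 c003) + (-9*c003*c300 + c102*c201)*(hD003 c300 c210 c201 c120 c111 c102 c030 c021 c012 c003 * c021 - c003 * hD021 c300 c210 c201 c120 c111 c102 c030 c021 c012 c003)"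
    unfolding hD003_def hD201_def hD111_def hD021_def hD102_def hD012_def by algebra
  then have "(4*c201*c021 - c111^2)*(hD003 c300 c210 c201 c120 c111 c102 c030 c021 c012 c003 * c102 - c003 * hD102 c300 c210 c201 c120 c111 c102 c030 c021 c012 c003) = 0" using g1 g2 g3 by simp
  moreover have "(4*c201*c021 - c111^2)*(hD003 c300 c210 c201 c120 c111 c102 c030 c021 c012 c003 * c012 - c003 * hD012 c300 c210 c201 c120 c111 c102 c030 c021 c012 c003) = (-9*c003*c030 + c012*c021)*(hD003 c300 c210 c201 c120 c111 c102 c030 c021 c012 c003 * c201 - c003 * hD201 c300 c210 c201 c120 c111 c102 c030 c021 c012 c003) + (3*c003*c120 + c102*c021 - c012*c111)*(hD003 c300 c210 c201 c120 c111 c102 c030 c021 c012 c003 * c111 - c003 * hD111 c300 c210 c201 c120 c111 c102 c030 c021 c012 c003) + (-3*c003*c210 - c102*c111 + 3*c012*c201)*(hD003 c300 c210 c201 c120 c111 c102 c030 c021 c012 c003 * c021 - c003 * hD021 c300 c210 c201 c120 c111 c102 c030 c021 c012 c003)"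
    unfolding hD003_def hD201_def hD111_def hD021_def hD102_def hD012_def by algebra
  then have "(4*c201*c021 - c111^2)*(hD003 c300 c210 c201 c120 c111 c102 c030 c021 c012 c003 * c012 - c003 * hD012 c300 c210 c201 c120 c111 c102 c030 c021 c012 c003) = 0" using g1 g2 g3 by simp
  ultimately show ?thesis using d by simp
qed

lemma alg_main:
  fixes c300 c210 c201 c120 c111 c102 c030 c021 c012 c003 :: complex
  assumes s: "c003 \<noteq> 0"
  shows "((\<exists>u1 u2 u3 v1 v2 v3 w1 w2 w3. c300 = u1*v1*w1 \<and> c210 = u1*v1*w2 + u1*v2*w1 + u2*v1*w1 \<and> c201 = u1*v1*w3 + u1*v3*w1 + u3*v1*w1 \<and> c120 = u1*v2*w2 + u2*v1*w2 + u2*v2*w1 \<and> c111 = u1*v2*w3 + u1*v3*w2 + u2*v1*w3 + u2*v3*w1 + u3*v1*w2 + u3*v2*w1 \<and> c102 = u1*v3*w3 + u3*v1*w3 + u3*v3*w1 \<and> c030 = u2*v2*w2 \<and> c021 = u2*v2*w3 + u2*v3*w2 + u3*v2*w2 \<and> c012 = u2*v3*w3 + u3*v2*w3 + u3*v3*w2 \<and> c003 = u3*v3*w3) \<longleftrightarrow> (hD003 c300 c210 c201 c120 c111 c102 c030 c021 c012 c003 * c201 - c003 * hD201 c300 c210 c201 c120 c111 c102 c030 c021 c012 c003 = 0 \<and> hD003 c300 c210 c201 c120 c111 c102 c030 c021 c012 c003 * c111 - c003 * hD111 c300 c210 c201 c120 c111 c102 c030 c021 c012 c003 = 0 \<and>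 hD003 c300 c210 c201 c120 c111 c102 c030 c021 c012 c003 * c021 - c003 * hD021 c300 c210 c201 c120 c111 c102 c030 c021 c012 c003 = 0 \<and> hD003 c300 c210 c201 c120 c111 c102 c030 c021 c012 c003 * c102 - c003 * hD102 c300 c210 c201 c120 c111 c102 c030 c021 c012 c003 = 0 \<and> hD003 c300 c210 c201 c120 c111 c102 c030 c021 c012 c003 * c012 - c003 * hD012 c300 c210 c201 c120 c111 c102 c030 c021 c012 c003 = 0))
     \<and> (4*c201*c021 - c111^2 \<noteq> 0 \<longrightarrow> ((\<exists>u1 u2 u3 v1 v2 v3 w1 w2 w3. c300 = u1*v1*w1 \<and> c210 = u1*v1*w2 + u1*v2*w1 + u2*v1*w1 \<and> c201 = u1*v1*w3 + u1*v3*w1 + u3*v1*w1 \<and> c120 = u1*v2*w2 + u2*v1*w2 + u2*v2*w1 \<and> c111 = u1*v2*w3 + u1*v3*w2 + u2*v1*w3 + u2*v3*w1 + u3*v1*w2 + u3*v2*w1 \<and> c102 = u1*v3*w3 + u3*v1*w3 + u3*v3*w1 \<and> c030 = u2*v2*w2 \<and> c021 = u2*v2*w3 + u2*v3*w2 + u3*v2*w2 \<and> c012 = u2*v3*w3 + u3*v2*w3 + u3*v3*w2 \<and> c003 = u3*v3*w3) \<longleftrightarrow> (hD003 c300 c210 c201 c120 c111 c102 c030 c021 c012 c003 * c201 - c003 * hD201 c300 c210 c201 c120 c111 c102 c030 c021 c012 c003 = 0 \<and> hD003 c300 c210 c201 c120 c111 c102 c030 c021 c012 c003 * c111 - c003 *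 hD111 c300 c210 c201 c120 c111 c102 c030 c021 c012 c003 = 0 \<and> hD003 c300 c210 c201 c120 c111 c102 c030 c021 c012 c003 * c021 - c003 * hD021 c300 c210 c201 c120 c111 c102 c030 c021 c012 c003 = 0)))"
proof -
  have fw: "hD003 c300 c210 c201 c120 c111 c102 c030 c021 c012 c003 * c201 - c003 * hD201 c300 c210 c201 c120 c111 c102 c030 c021 c012 c003 = 0 \<and> hD003 c300 c210 c201 c120 c111 c102 c030 c021 c012 c003 * c111 - c003 * hD111 c300 c210 c201 c120 c111 c102 c030 c021 c012 c003 = 0 \<and> hD003 c300 c210 c201 c120 c111 c102 c030 c021 c012 c003 * c021 - c003 * hD021 c300 c210 c201 c120 c111 c102 c030 c021 c012 c003 = 0 \<and> hD003 c300 c210 c201 c120 c111 c102 c030 c021 c012 c003 * c102 - c003 * hD102 c300 c210 c201 c120 c111 c102 c030 c021 c012 c003 = 0 \<and> hD003 c300 c210 c201 c120 c111 c102 c030 c021 c012 c003 * c012 - c003 * hD012 c300 c210 c201 c120 c111 c102 c030 c021 c012 c003 = 0" if "\<exists>u1 u2 u3 v1 v2 v3 w1 w2 w3. c300 = u1*v1*w1 \<and> c210 = u1*v1*w2 + u1*v2*w1 + u2*v1*w1 \<and> c201 = u1*v1*w3 + u1*v3*w1 + u3*v1*w1 \<and> c120 = u1*v2*w2 + u2*v1*w2 + u2*v2*w1 \<and> c111 = u1*v2*w3 + u1*v3*w2 + u2*v1*w3 + u2*v3*w1 + u3*v1*w2 + u3*v2*w1 \<and> c102 = u1*v3*w3 +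 u3*v1*w3 + u3*v3*w1 \<and> c030 = u2*v2*w2 \<and> c021 = u2*v2*w3 + u2*v3*w2 + u3*v2*w2 \<and> c012 = u2*v3*w3 + u3*v2*w3 + u3*v3*w2 \<and> c003 = u3*v3*w3"
    using that
  proof (elim exE)
    fix u1 u2 u3 v1 v2 v3 w1 w2 w3 assume h: "c300 = u1*v1*w1 \<and> c210 = u1*v1*w2 + u1*v2*w1 + u2*v1*w1 \<and> c201 = u1*v1*w3 + u1*v3*w1 + u3*v1*w1 \<and> c120 = u1*v2*w2 + u2*v1*w2 + u2*v2*w1 \<and> c111 = u1*v2*w3 + u1*v3*w2 + u2*v1*w3 + u2*v3*w1 + u3*v1*w2 + u3*v2*w1 \<and> c102 = u1*v3*w3 + u3*v1*w3 + u3*v3*w1 \<and> c030 = u2*v2*w2 \<and> c021 = u2*v2*w3 + u2*v3*w2 + u3*v2*w2 \<and> c012 = u2*v3*w3 + u3*v2*w3 + u3*v3*w2 \<and> c003 = u3*v3*w3"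
    show ?thesis by (rule fwd_alg[OF h])
  qed
  have cv: "\<exists>u1 u2 u3 v1 v2 v3 w1 w2 w3. c300 = u1*v1*w1 \<and> c210 = u1*v1*w2 + u1*v2*w1 + u2*v1*w1 \<and> c201 = u1*v1*w3 + u1*v3*w1 + u3*v1*w1 \<and> c120 = u1*v2*w2 + u2*v1*w2 + u2*v2*w1 \<and> c111 = u1*v2*w3 + u1*v3*w2 + u2*v1*w3 + u2*v3*w1 + u3*v1*w2 + u3*v2*w1 \<and> c102 = u1*v3*w3 + u3*v1*w3 + u3*v3*w1 \<and> c030 = u2*v2*w2 \<and> c021 = u2*v2*w3 + u2*v3*w2 + u3*v2*w2 \<and> c012 = u2*v3*w3 + u3*v2*w3 + u3*v3*w2 \<and> c003 = u3*v3*w3" if "hD003 c300 c210 c201 c120 c111 c102 c030 c021 c012 c003 * c201 - c003 * hD201 c300 c210 c201 c120 c111 c102 c030 c021 c012 c003 = 0" "hD003 c300 c210 c201 c120 c111 c102 c030 c021 c012 c003 * c111 - c003 * hD111 c300 c210 c201 c120 c111 c102 c030 c021 c012 c003 = 0" "hD003 c300 c210 c201 c120 c111 c102 c030 c021 c012 c003 * c021 - c003 * hD021 c300 c210 c201 c120 c111 c102 c030 c021 c012 c003 = 0" "hD003 c300 c210 c201 c120 c111 c102 c030 c021 c012 c003 * c102 - c003 * hD102 c300 c210 c201 c120 c111 c102 c030 c021 c012 c003 = 0" "hD003 c300 c210 c201 c120 c111 c102 c030 c021 c012 c003 * c012 - c003 * hD012 c300 c210 c201 c120 c111 c102 c030 c021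 c012 c003 = 0"
    using conv_alg[OF s that] .
  have cv5: "\<exists>u1 u2 u3 v1 v2 v3 w1 w2 w3. c300 = u1*v1*w1 \<and> c210 = u1*v1*w2 + u1*v2*w1 + u2*v1*w1 \<and> c201 = u1*v1*w3 + u1*v3*w1 + u3*v1*w1 \<and> c120 = u1*v2*w2 + u2*v1*w2 + u2*v2*w1 \<and> c111 = u1*v2*w3 + u1*v3*w2 + u2*v1*w3 + u2*v3*w1 + u3*v1*w2 + u3*v2*w1 \<and> c102 = u1*v3*w3 + u3*v1*w3 + u3*v3*w1 \<and> c030 = u2*v2*w2 \<and> c021 = u2*v2*w3 + u2*v3*w2 + u3*v2*w2 \<and> c012 = u2*v3*w3 + u3*v2*w3 + u3*v3*w2 \<and> c003 = u3*v3*w3" if h: "hD003 c300 c210 c201 c120 c111 c102 c030 c021 c012 c003 * c201 - c003 * hD201 c300 c210 c201 c120 c111 c102 c030 c021 c012 c003 = 0 \<and> hD003 c300 c210 c201 c120 c111 c102 c030 c021 c012 c003 * c111 - c003 * hD111 c300 c210 c201 c120 c111 c102 c030 c021 c012 c003 = 0 \<and> hD003 c300 c210 c201 c120 c111 c102 c030 c021 c012 c003 * c021 - c003 * hD021 c300 c210 c201 c120 c111 c102 c030 c021 c012 c003 = 0 \<and> hD003 c300 c210 c201 c120 c111 c102 c030 c021 c012 c003 * c102 - c003 * hD102 c300 c210 c201 c120 c111 c102 c030 c021 c012 c003 = 0 \<and> hD003 c300 c210 c201 c120 c111 c102 c030 c021 c012 c003 * c012 - c003 * hD012 c300 c210 c201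 c120 c111 c102 c030 c021 c012 c003 = 0"
    by (rule cv[OF h[THEN conjunct1] h[THEN conjunct2, THEN conjunct1] h[THEN conjunct2, THEN conjunct2, THEN conjunct1]
          h[THEN conjunct2, THEN conjunct2, THEN conjunct2, THEN conjunct1] h[THEN conjunct2, THEN conjunct2, THEN conjunct2, THEN conjunct2]])
  have P1: "(\<exists>u1 u2 u3 v1 v2 v3 w1 w2 w3. c300 = u1*v1*w1 \<and> c210 = u1*v1*w2 + u1*v2*w1 + u2*v1*w1 \<and> c201 = u1*v1*w3 + u1*v3*w1 + u3*v1*w1 \<and> c120 = u1*v2*w2 + u2*v1*w2 + u2*v2*w1 \<and> c111 = u1*v2*w3 + u1*v3*w2 + u2*v1*w3 + u2*v3*w1 + u3*v1*w2 + u3*v2*w1 \<and> c102 = u1*v3*w3 + u3*v1*w3 + u3*v3*w1 \<and> c030 = u2*v2*w2 \<and> c021 = u2*v2*w3 + u2*v3*w2 + u3*v2*w2 \<and> c012 = u2*v3*w3 + u3*v2*w3 + u3*v3*w2 \<and> c003 = u3*v3*w3) \<longleftrightarrow> (hD003 c300 c210 c201 c120 c111 c102 c030 c021 c012 c003 * c201 - c003 * hD201 c300 c210 c201 c120 c111 c102 c030 c021 c012 c003 = 0 \<and> hD003 c300 c210 c201 c120 c111 c102 c030 c021 c012 c003 * c111 - c003 * hD111 c300 c210 c201 c120 c111 c102 c030 c021 c012 c003 = 0 \<and> hD003 c300 c210 c201 c120 c111 c102 c030 c021 c012 c003 * c021 - c003 * hD021 c300 c210 c201 c120 c111 c102 c030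 c021 c012 c003 = 0 \<and> hD003 c300 c210 c201 c120 c111 c102 c030 c021 c012 c003 * c102 - c003 * hD102 c300 c210 c201 c120 c111 c102 c030 c021 c012 c003 = 0 \<and> hD003 c300 c210 c201 c120 c111 c102 c030 c021 c012 c003 * c012 - c003 * hD012 c300 c210 c201 c120 c111 c102 c030 c021 c012 c003 = 0)"
    by (rule iffI[OF fw cv5])
  have fw3: "hD003 c300 c210 c201 c120 c111 c102 c030 c021 c012 c003 * c201 - c003 * hD201 c300 c210 c201 c120 c111 c102 c030 c021 c012 c003 = 0 \<and> hD003 c300 c210 c201 c120 c111 c102 c030 c021 c012 c003 * c111 - c003 * hD111 c300 c210 c201 c120 c111 c102 c030 c021 c012 c003 = 0 \<and> hD003 c300 c210 c201 c120 c111 c102 c030 c021 c012 c003 * c021 - c003 * hD021 c300 c210 c201 c120 c111 c102 c030 c021 c012 c003 = 0" if h: "\<exists>u1 u2 u3 v1 v2 v3 w1 w2 w3. c300 = u1*v1*w1 \<and> c210 = u1*v1*w2 + u1*v2*w1 + u2*v1*w1 \<and> c201 = u1*v1*w3 + u1*v3*w1 + u3*v1*w1 \<and> c120 = u1*v2*w2 + u2*v1*w2 + u2*v2*w1 \<and> c111 = u1*v2*w3 + u1*v3*w2 + u2*v1*w3 + u2*v3*w1 + u3*v1*w2 + u3*v2*w1 \<and> c102 = u1*v3*w3 + u3*v1*w3 + u3*v3*w1 \<and> c030 = u2*v2*w2 \<and> c021 = u2*v2*w3 + u2*v3*w2 + u3*v2*w2 \<and> c012 = u2*v3*w3 + u3*v2*w3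 + u3*v3*w2 \<and> c003 = u3*v3*w3"
  proof -
    note f5 = fw[OF h]
    show ?thesis by (rule conjI[OF f5[THEN conjunct1] conjI[OF f5[THEN conjunct2, THEN conjunct1] f5[THEN conjunct2, THEN conjunct2, THEN conjunct1]]])
  qed
  have cv3: "\<exists>u1 u2 u3 v1 v2 v3 w1 w2 w3. c300 = u1*v1*w1 \<and> c210 = u1*v1*w2 + u1*v2*w1 + u2*v1*w1 \<and> c201 = u1*v1*w3 + u1*v3*w1 + u3*v1*w1 \<and> c120 = u1*v2*w2 + u2*v1*w2 + u2*v2*w1 \<and> c111 = u1*v2*w3 + u1*v3*w2 + u2*v1*w3 + u2*v3*w1 + u3*v1*w2 + u3*v2*w1 \<and> c102 = u1*v3*w3 + u3*v1*w3 + u3*v3*w1 \<and> c030 = u2*v2*w2 \<and> c021 = u2*v2*w3 + u2*v3*w2 + u3*v2*w2 \<and> c012 = u2*v3*w3 + u3*v2*w3 + u3*v3*w2 \<and> c003 = u3*v3*w3" if d: "4*c201*c021 - c111^2 \<noteq> 0" and g: "hD003 c300 c210 c201 c120 c111 c102 c030 c021 c012 c003 * c201 - c003 * hD201 c300 c210 c201 c120 c111 c102 c030 c021 c012 c003 = 0 \<and> hD003 c300 c210 c201 c120 c111 c102 c030 c021 c012 c003 * c111 - c003 * hD111 c300 c210 c201 c120 c111 c102 c030 c021 c012 c003 = 0 \<and> hD003 c300 c210 c201 c120 c111 c102 c030 c021 c012 c003 * c021 - c003 * hD021 c300 c210 c201 c120 c111 c102 c030 c021 c012 c003 = 0"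
  proof -
    note g1 = g[THEN conjunct1] and g2 = g[THEN conjunct2, THEN conjunct1] and g3 = g[THEN conjunct2, THEN conjunct2]
    have g45: "hD003 c300 c210 c201 c120 c111 c102 c030 c021 c012 c003 * c102 - c003 * hD102 c300 c210 c201 c120 c111 c102 c030 c021 c012 c003 = 0 \<and> hD003 c300 c210 c201 c120 c111 c102 c030 c021 c012 c003 * c012 - c003 * hD012 c300 c210 c201 c120 c111 c102 c030 c021 c012 c003 = 0" by (rule part2_alg[OF d g1 g2 g3])
    show ?thesis by (rule cv[OF g1 g2 g3 g45[THEN conjunct1] g45[THEN conjunct2]])
  qed
  have P2: "4*c201*c021 - c111^2 \<noteq> 0 \<longrightarrow> ((\<exists>u1 u2 u3 v1 v2 v3 w1 w2 w3. c300 = u1*v1*w1 \<and> c210 = u1*v1*w2 + u1*v2*w1 + u2*v1*w1 \<and> c201 = u1*v1*w3 + u1*v3*w1 + u3*v1*w1 \<and> c120 = u1*v2*w2 + u2*v1*w2 + u2*v2*w1 \<and> c111 = u1*v2*w3 + u1*v3*w2 + u2*v1*w3 + u2*v3*w1 + u3*v1*w2 + u3*v2*w1 \<and> c102 = u1*v3*w3 + u3*v1*w3 + u3*v3*w1 \<and> c030 = u2*v2*w2 \<and> c021 = u2*v2*w3 + u2*v3*w2 + u3*v2*w2 \<and> c012 = u2*v3*w3 + u3*v2*w3 + u3*v3*w2 \<and> c003 = u3*v3*w3) \<longleftrightarrow> (hD003 c300 c210 c201 c120 c111 c102 c030 c021 c012 c003 * c201 - c003 * hD201 c300 c210 c201 c120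 c111 c102 c030 c021 c012 c003 = 0 \<and> hD003 c300 c210 c201 c120 c111 c102 c030 c021 c012 c003 * c111 - c003 * hD111 c300 c210 c201 c120 c111 c102 c030 c021 c012 c003 = 0 \<and> hD003 c300 c210 c201 c120 c111 c102 c030 c021 c012 c003 * c021 - c003 * hD021 c300 c210 c201 c120 c111 c102 c030 c021 c012 c003 = 0))"
  proof (rule impI)
    assume d: "4*c201*c021 - c111^2 \<noteq> 0"
    show "(\<exists>u1 u2 u3 v1 v2 v3 w1 w2 w3. c300 = u1*v1*w1 \<and> c210 = u1*v1*w2 + u1*v2*w1 + u2*v1*w1 \<and> c201 = u1*v1*w3 + u1*v3*w1 + u3*v1*w1 \<and> c120 = u1*v2*w2 + u2*v1*w2 + u2*v2*w1 \<and> c111 = u1*v2*w3 + u1*v3*w2 + u2*v1*w3 + u2*v3*w1 + u3*v1*w2 + u3*v2*w1 \<and> c102 = u1*v3*w3 + u3*v1*w3 + u3*v3*w1 \<and> c030 = u2*v2*w2 \<and> c021 = u2*v2*w3 + u2*v3*w2 + u3*v2*w2 \<and> c012 = u2*v3*w3 + u3*v2*w3 + u3*v3*w2 \<and> c003 = u3*v3*w3) \<longleftrightarrow> (hD003 c300 c210 c201 c120 c111 c102 c030 c021 c012 c003 * c201 - c003 * hD201 c300 c210 c201 c120 c111 c102 c030 c021 c012 c003 = 0 \<and> hD003 c300 c210 c201 c120 c111 c102 c030 c021 c012 c003 * c111 - c003 * hD111 c300 c210 c201 c120 c111 c102 c030 c021 c012 c003 = 0 \<and> hD003 c300 c210 c201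 c120 c111 c102 c030 c021 c012 c003 * c021 - c003 * hD021 c300 c210 c201 c120 c111 c102 c030 c021 c012 c003 = 0)" by (rule iffI[OF fw3 cv3[OF d]])
  qed
  show ?thesis by (rule conjI[OF P1 P2])
qed

lemma cubf_inj:
  "(cubf c300 c210 c201 c120 c111 c102 c030 c021 c012 c003 = cubf b300 b210 b201 b120 b111 b102 b030 b021 b012 b003) \<longleftrightarrow> (c300 = b300 \<and> c210 = b210 \<and> c201 = b201 \<and> c120 = b120 \<and> c111 = b111 \<and> c102 = b102 \<and> c030 = b030 \<and> c021 = b021 \<and> c012 = b012 \<and> c003 = b003)"
proof
  assume h: "cubf c300 c210 c201 c120 c111 c102 c030 c021 c012 c003 = cubf b300 b210 b201 b120 b111 b102 b030 b021 b012 b003"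
  have ev: "\<And>x y z. cubf c300 c210 c201 c120 c111 c102 c030 c021 c012 c003 x y z = cubf b300 b210 b201 b120 b111 b102 b030 b021 b012 b003 x y z" by (simp add: h)
  show "c300 = b300 \<and> c210 = b210 \<and> c201 = b201 \<and> c120 = b120 \<and> c111 = b111 \<and> c102 = b102 \<and> c030 = b030 \<and> c021 = b021 \<and> c012 = b012 \<and> c003 = b003"
    using ev[of 3 0 0] ev[of 2 1 0] ev[of 2 0 1] ev[of 1 2 0] ev[of 1 1 1] ev[of 1 0 2] ev[of 0 3 0] ev[of 0 2 1] ev[of 0 1 2] ev[of 0 0 3] by (simp add: cubf_def)
qed simp

lemma cubf_vals:
  "cubf c300 c210 c201 c120 c111 c102 c030 c021 c012 c003 3 0 0 = c300"
  "cubf c300 c210 c201 c120 c111 c102 c030 c021 c012 c003 2 1 0 = c210"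
  "cubf c300 c210 c201 c120 c111 c102 c030 c021 c012 c003 2 0 1 = c201"
  "cubf c300 c210 c201 c120 c111 c102 c030 c021 c012 c003 1 2 0 = c120"
  "cubf c300 c210 c201 c120 c111 c102 c030 c021 c012 c003 1 1 1 = c111"
  "cubf c300 c210 c201 c120 c111 c102 c030 c021 c012 c003 1 0 2 = c102"
  "cubf c300 c210 c201 c120 c111 c102 c030 c021 c012 c003 0 3 0 = c030"
  "cubf c300 c210 c201 c120 c111 c102 c030 c021 c012 c003 0 2 1 = c021"
  "cubf c300 c210 c201 c120 c111 c102 c030 c021 c012 c003 0 1 2 = c012"
  "cubf c300 c210 c201 c120 c111 c102 c030 c021 c012 c003 0 0 3 = c003"
  by (simp_all add: cubf_def)

lemma cr_iff:
  "completely_reducible (cubf c300 c210 c201 c120 c111 c102 c030 c021 c012 c003) \<longleftrightarrow> (\<exists>u1 u2 u3 v1 v2 v3 w1 w2 w3. c300 = u1*v1*w1 \<and> c210 = u1*v1*w2 + u1*v2*w1 + u2*v1*w1 \<and> c201 = u1*v1*w3 + u1*v3*w1 + u3*v1*w1 \<and> c120 = u1*v2*w2 + u2*v1*w2 + u2*v2*w1 \<and> c111 = u1*v2*w3 + u1*v3*w2 + u2*v1*w3 + u2*v3*w1 + u3*v1*w2 + u3*v2*w1 \<and> c102 = u1*v3*w3 + u3*v1*w3 + u3*v3*w1 \<and> c030 = u2*v2*w2 \<and> c021 = u2*v2*w3 + u2*v3*w2 + u3*v2*w2 \<and> c012 = u2*v3*w3 + u3*v2*w3 + u3*v3*w2 \<and>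 c003 = u3*v3*w3)"
  unfolding completely_reducible_def pmult3 cubf_inj
  by simp

lemma c3_vals:
  "coeff3 P 3 3 3 = P 0 0 3" "coeff3 P 1 1 3 = P 2 0 1" "coeff3 P 1 2 3 = P 1 1 1"
  "coeff3 P 2 2 3 = P 0 2 1" "coeff3 P 1 3 3 = P 1 0 2" "coeff3 P 2 3 3 = P 0 1 2"
  by (simp_all add: coeff3_def cnt_def numeral_3_eq_3 numeral_2_eq_2)

lemma g_val: "psub (psmult x F) (psmult y D) a b c = x * F a b c - y * D a b c"
  by (simp add: psub_def psmult_def)

theorem lemma10p1:
  fixes f :: poly3
  assumes "cubic_form f"
    and "coeff3 f 3 3 3 \<noteq> 0"
  shows "let \<Delta> = hessian3 f;
             g = psub (psmult (coeff3 \<Delta> 3 3 3) f) (psmult (coeff3 f 3 3 3) \<Delta>)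
         in (completely_reducible f \<longleftrightarrow>
               (coeff3 g 1 1 3 = 0 \<and> coeff3 g 1 2 3 = 0 \<and> coeff3 g 2 2 3 = 0 \<and>
                coeff3 g 1 3 3 = 0 \<and> coeff3 g 2 3 3 = 0))
          \<and> (4 * coeff3 f 1 1 3 * coeff3 f 2 2 3 - (coeff3 f 1 2 3)^2 \<noteq> 0 \<longrightarrow>
               (completely_reducible f \<longleftrightarrow>
                 (coeff3 g 1 1 3 = 0 \<and> coeff3 g 1 2 3 = 0 \<and> coeff3 g 2 2 3 = 0)))"
proof -
  define c300 where "c300 = f 3 0 0"
  define c210 where "c210 = f 2 1 0"
  define c201 where "c201 = f 2 0 1"
  define c120 where "c120 = f 1 2 0"
  define c111 where "c111 = f 1 1 1"
  define c102 where "c102 = f 1 0 2"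
  define c030 where "c030 = f 0 3 0"
  define c021 where "c021 = f 0 2 1"
  define c012 where "c012 = f 0 1 2"
  define c003 where "c003 = f 0 0 3"
  have fE: "f = cubf c300 c210 c201 c120 c111 c102 c030 c021 c012 c003"
    unfolding c300_def c210_def c201_def c120_def c111_def c102_def c030_def c021_def c012_def c003_def by (rule cubic_eq[OF assms(1)])
  have s: "c003 \<noteq> 0" using assms(2) unfolding c3_vals c003_def .
  show ?thesis
    unfolding Let_def c3_vals g_val
    unfolding fE cubf_vals hD003_eq hD201_eq hD111_eq hD021_eq hD102_eq hD012_eq cr_iff
    by (rule alg_main[OF s])
qed

end
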